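(* Let $n\equiv 1\pmod 4$. Then the set $$\{h,\ x_n,x_{n-1},\ldots,x_{\frac{n+7}2},x_{\frac{n+5}2},\ x_{\frac{n+3}2}x_{\frac{n-1}2}\cdots x_6x_4,\ x_{\frac{n+1}2}x_{\frac{n-3}2}\cdots x_5x_3\}$$ is a generating set of $\mathcal{AM}_n$ of minimum size. In particular, $\mathcal{AM}_n$ has rank $\frac{n+1}2+1$.
   Context: Let $\Omega_n=\{1<2<\cdots<n\}$ and $\mathcal{I}_n$ the monoid of all partial injective maps of $\Omega_n$, written on the right and composed left to right. $\mathcal{AI}_n$ is the set of all $\alpha\in\mathcal{I}_n$ with $\alpha=\sigma|_{\mathrm{Dom}(\alpha)}$ for some even permutation $\sigma$; $\mathcal{PMI}_n$ is the set of monotone (order-preserving or order-reversing) elements and $\mathcal{AM}_n=\mathcal{AI}_n\cap\mathcal{PMI}_n$. The rank of a monoid is the minimum size of a generating set. $h$ is the permutation $i\mapsto n+1-i$. Let $X_i=\Omega_n\setminus\{i\}$. Define $x_1,\dots,x_n$ as the (unique) order-preserving partial permutations with: $x_1$: domain $X_1$, image $X_n$ if $n$ is odd and $X_{n-1}$ if $n$ is even; $x_2$: domain $X_2$, image $X_{n-1}$ if $n$ is odd and $X_n$ if $n$ is even; $x_i$ ($3\leqslant i\leqslant n$): domain $X_i$, image $X_{i-2}$. The products $x_{\frac{n+3}2}x_{\frac{n-1}2}\cdots x_4$ and $x_{\frac{n+1}2}x_{\frac{n-3}2}\cdots x_3$ have indices decreasing by $2$. *)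

theory Defs
  imports "HOL-Combinatorics.Permutations"
begin

type_synonym pmap = "nat \<Rightarrow> nat option"

definition Omega :: "nat \<Rightarrow> nat set" where
  "Omega n = {1..n}"

definition PI :: "nat \<Rightarrow> pmap set" where
  "PI n = {\<alpha>. dom \<alpha> \<subseteq> Omega n \<and> ran \<alpha> \<subseteq> Omega n \<and> inj_on \<alpha> (dom \<alpha>)}"

text \<open>Maps are written on the right and composed left to right: first alpha, then beta.\<close>
definition pcomp :: "pmap \<Rightarrow> pmap \<Rightarrow> pmap" where
  "pcomp \<alpha> \<beta> = \<beta> \<circ>\<^sub>m \<alpha>"

definition pid :: "nat \<Rightarrow> pmap" where
  "pid n = (\<lambda>x. if x \<in> Omega n then Some x else None)"

definition AI :: "nat \<Rightarrow> pmap set" where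
  "AI n = {\<alpha> \<in> PI n. \<exists>\<sigma>. \<sigma> permutes Omega n \<and> evenperm \<sigma> \<and>
                       (\<forall>x \<in> dom \<alpha>. \<alpha> x = Some (\<sigma> x))}"

definition order_preserving :: "pmap \<Rightarrow> bool" where
  "order_preserving \<alpha> \<longleftrightarrow>
     (\<forall>x \<in> dom \<alpha>. \<forall>y \<in> dom \<alpha>. x \<le> y \<longrightarrow> the (\<alpha> x) \<le> the (\<alpha> y))"

definition order_reversing :: "pmap \<Rightarrow> bool" where
  "order_reversing \<alpha> \<longleftrightarrow>
     (\<forall>x \<in> dom \<alpha>. \<forall>y \<in> dom \<alpha>. x \<le> y \<longrightarrow> the (\<alpha> y) \<le> the (\<alpha> x))"

definition PMI :: "nat \<Rightarrow> pmap set" where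
  "PMI n = {\<alpha> \<in> PI n. order_preserving \<alpha> \<or> order_reversing \<alpha>}"

definition AM :: "nat \<Rightarrow> pmap set" where
  "AM n = AI n \<inter> PMI n"

inductive_set gen :: "nat \<Rightarrow> pmap set \<Rightarrow> pmap set" for n A where
  gen_id: "pid n \<in> gen n A"
| gen_step: "\<beta> \<in> gen n A \<Longrightarrow> a \<in> A \<Longrightarrow> pcomp \<beta> a \<in> gen n A"

definition mrank :: "nat \<Rightarrow> pmap set \<Rightarrow> nat" where
  "mrank n M = (LEAST k. \<exists>A. A \<subseteq> M \<and> finite A \<and> card A = k \<and> gen n A = M)"

definition hmap :: "nat \<Rightarrow> pmap" where
  "hmap n = (\<lambda>i. if i \<in> Omega n then Some (n + 1 - i) else None)"

text \<open>The unique order-preserving partial permutation with domain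
  X_i = Omega n - {i} and image X_j = Omega n - {j} (for i, j in Omega n):
  the r-th element of X_i is sent to the r-th element of X_j.\<close>
definition opmap :: "nat \<Rightarrow> nat \<Rightarrow> nat \<Rightarrow> pmap" where
  "opmap n i j = (\<lambda>x. if x \<in> Omega n - {i} then
      (let r = (if x < i then x else x - 1) in Some (if r < j then r else r + 1))
    else None)"

definition xgen :: "nat \<Rightarrow> nat \<Rightarrow> pmap" where
  "xgen n i =
    (if i = 1 then opmap n 1 (if odd n then n else n - 1)
     else if i = 2 then opmap n 2 (if odd n then n - 1 else n)
     else opmap n i (i - 2))"

definition plist_prod :: "nat \<Rightarrow> pmap list \<Rightarrow> pmap" where
  "plist_prod n as = foldr pcomp as (pid n)"

definition genset :: "nat \<Rightarrow> pmap set" where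
  "genset n =
     {hmap n} \<union> {xgen n i | i. (n + 5) div 2 \<le> i \<and> i \<le> n}
     \<union> {plist_prod n (map (\<lambda>k. xgen n ((n + 3) div 2 - 2 * k)) [0..<(n - 1) div 4]),
        plist_prod n (map (\<lambda>k. xgen n ((n + 1) div 2 - 2 * k)) [0..<(n - 1) div 4])}"

end

theory Submission
  imports Defs
begin

lemma Omega_mem[simp]: "x \<in> Omega n \<longleftrightarrow> 1 \<le> x \<and> x \<le> n"
  by (auto simp add: Omega_def)

lemma finite_Omega[simp]: "finite (Omega n)" by (simp add: Omega_def)
lemma card_Omega[simp]: "card (Omega n) = n" by (simp add: Omega_def)

lemma pcomp_apply: "pcomp a b x = (case a x of None \<Rightarrow> None | Some y \<Rightarrow> b y)"
  by (simp add: pcomp_def map_comp_def)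

lemma pcomp_assoc: "pcomp (pcomp a b) c = pcomp a (pcomp b c)"
  by (rule ext) (simp add: pcomp_apply split: option.split)

lemma dom_pcomp: "dom (pcomp a b) = {x \<in> dom a. the (a x) \<in> dom b}"
  by (auto simp: pcomp_apply split: option.splits)

lemma dom_pcomp_sub: "dom (pcomp a b) \<subseteq> dom a"
  by (auto simp: dom_pcomp)

lemma ran_pcomp_sub: "ran (pcomp a b) \<subseteq> ran b"
  by (auto simp: ran_def pcomp_apply split: option.splits)

lemma pid_apply: "pid n x = (if 1 \<le> x \<and> x \<le> n then Some x else None)"
  by (simp add: pid_def)

lemma dom_pid[simp]: "dom (pid n) = Omega n"
  by (auto simp: pid_def split: if_splits)

lemma PI_D: assumes "a \<in> PI n" shows "dom a \<subseteq> Omega n" "ran a \<subseteq> Omega n" "inj_on a (dom a)"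
  using assms by (auto simp: PI_def)

lemma PI_val: assumes "a \<in> PI n" "a x = Some y" shows "x \<in> Omega n" "y \<in> Omega n"
  using assms by (auto simp: PI_def ran_def dom_def)

lemma pid_PI: "pid n \<in> PI n"
  by (auto simp: PI_def pid_def ran_def inj_on_def split: if_splits)

lemma pcomp_PI: assumes "a \<in> PI n" "b \<in> PI n" shows "pcomp a b \<in> PI n"
proof -
  have "dom (pcomp a b) \<subseteq> Omega n" using dom_pcomp_sub PI_D(1)[OF assms(1)] by blast
  moreover have "ran (pcomp a b) \<subseteq> Omega n" using ran_pcomp_sub PI_D(2)[OF assms(2)] by blast
  moreover have "inj_on (pcomp a b) (dom (pcomp a b))"
  proof (rule inj_onI)
    fix x y assume x: "x \<in> dom (pcomp a b)" and y: "y \<in> dom (pcomp a b)" and e: "pcomp a b x = pcomp a b y"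
    obtain u where u: "a x = Some u" "u \<in> dom b" using x by (force simp: pcomp_apply dom_def split: option.splits)
    obtain v where v: "a y = Some v" "v \<in> dom b" using y by (force simp: pcomp_apply dom_def split: option.splits)
    have "b u = b v" using e u v by (simp add: pcomp_apply)
    hence "u = v" using PI_D(3)[OF assms(2)] u v by (auto dest: inj_onD)
    hence "a x = a y" using u v by simp
    thus "x = y" using PI_D(3)[OF assms(1)] u v by (metis domI inj_onD)
  qed
  ultimately show ?thesis by (simp add: PI_def)
qed

lemma pcomp_pid_right: assumes "ran a \<subseteq> Omega n" shows "pcomp a (pid n) = a"
proof (rule ext)
  fix x show "pcomp a (pid n) x = a x"
  proof (cases "a x")
    case (Some y) then have "y \<in> Omega n" using assms by (auto simp: ran_def)
    then show ?thesis using Some by (simp add: pcomp_apply pid_def)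
  qed (simp add: pcomp_apply)
qed

lemma pcomp_pid_left: assumes "dom a \<subseteq> Omega n" shows "pcomp (pid n) a = a"
proof (rule ext)
  fix x
  have "x \<notin> Omega n \<Longrightarrow> a x = None" using assms by blast
  then show "pcomp (pid n) a x = a x"
    by (cases "x \<in> Omega n") (auto simp: pcomp_apply pid_def)
qed

lemma op_comp_pp: "order_preserving a \<Longrightarrow> order_preserving b \<Longrightarrow> order_preserving (pcomp a b)"
  unfolding order_preserving_def by (fastforce simp: dom_pcomp pcomp_apply split: option.splits)
lemma op_comp_rr: "order_reversing a \<Longrightarrow> order_reversing b \<Longrightarrow> order_preserving (pcomp a b)"
  unfolding order_preserving_def order_reversing_def by (fastforce simp: dom_pcomp pcomp_apply split: option.splits)
lemma op_comp_pr: "order_preserving a \<Longrightarrow> order_reversing b \<Longrightarrow> order_reversing (pcomp a b)"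
  unfolding order_preserving_def order_reversing_def by (fastforce simp: dom_pcomp pcomp_apply split: option.splits)
lemma op_comp_rp: "order_reversing a \<Longrightarrow> order_preserving b \<Longrightarrow> order_reversing (pcomp a b)"
  unfolding order_preserving_def order_reversing_def by (fastforce simp: dom_pcomp pcomp_apply split: option.splits)

lemma AI_comp: assumes "a \<in> AI n" "b \<in> AI n" shows "pcomp a b \<in> AI n"
proof -
  obtain s where s: "s permutes Omega n" "evenperm s" "\<forall>x\<in>dom a. a x = Some (s x)"
    using assms(1) by (auto simp: AI_def)
  obtain t where t: "t permutes Omega n" "evenperm t" "\<forall>x\<in>dom b. b x = Some (t x)"
    using assms(2) by (auto simp: AI_def)
  have "(t \<circ> s) permutes Omega n" by (rule permutes_compose[OF s(1) t(1)])
  moreover have "evenperm (t \<circ> s)"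
    using evenperm_comp[OF permutes_imp_permutation[OF finite_Omega t(1)] permutes_imp_permutation[OF finite_Omega s(1)]] s(2) t(2) by simp
  moreover have "\<forall>x\<in>dom (pcomp a b). pcomp a b x = Some ((t \<circ> s) x)"
  proof
    fix x assume "x \<in> dom (pcomp a b)"
    then obtain u where u: "a x = Some u" "u \<in> dom b" by (force simp: pcomp_apply dom_def split: option.splits)
    have "u = s x" using s(3) u by (metis domI option.inject)
    thus "pcomp a b x = Some ((t \<circ> s) x)" using u t(3) by (simp add: pcomp_apply)
  qed
  ultimately show ?thesis using pcomp_PI assms by (auto simp: AI_def)
qed

lemma AM_comp: assumes "a \<in> AM n" "b \<in> AM n" shows "pcomp a b \<in> AM n"
  using assms AI_comp pcomp_PI op_comp_pp op_comp_rr op_comp_pr op_comp_rp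
  by (auto simp: AM_def PMI_def)

lemma pid_AM: "pid n \<in> AM n"
proof -
  have "pid n \<in> AI n" unfolding AI_def using pid_PI
    by (auto intro!: exI[of _ id] simp: permutes_id evenperm_id pid_def split: if_splits)
  moreover have "order_preserving (pid n)" by (auto simp: order_preserving_def pid_def split: if_splits)
  ultimately show ?thesis using pid_PI by (simp add: AM_def PMI_def)
qed

lemma gen_sub: assumes "A \<subseteq> AM n" shows "gen n A \<subseteq> AM n"
proof
  fix x assume "x \<in> gen n A" then show "x \<in> AM n"
    by induct (use assms pid_AM AM_comp in auto)
qed

lemma AM_PI: "a \<in> AM n \<Longrightarrow> a \<in> PI n" by (simp add: AM_def AI_def)

lemma gen_mult: assumes "A \<subseteq> AM n" "b \<in> gen n A" "c \<in> gen n A" shows "pcomp b c \<in> gen n A"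
  using assms(3)
proof induct
  case gen_id
  have "b \<in> PI n" using gen_sub[OF assms(1)] assms(2) AM_PI by auto
  then show ?case using pcomp_pid_right PI_D(2) assms(2) by metis
next
  case (gen_step \<beta> a)
  then show ?case using gen.gen_step pcomp_assoc by metis
qed

lemma gen_base: "a \<in> A \<Longrightarrow> A \<subseteq> AM n \<Longrightarrow> a \<in> gen n A"
  using gen.gen_step[OF gen.gen_id] pcomp_pid_left AM_PI PI_D(1) by (metis subsetD)

lemma finite_PI: "finite (PI n)"
proof -
  have "PI n \<subseteq> (\<Union>D\<in>Pow (Omega n). {m. dom m = D \<and> ran m \<subseteq> Omega n})"
    by (auto simp: PI_def)
  moreover have "finite (\<Union>D\<in>Pow (Omega n). {m. dom m = D \<and> ran m \<subseteq> Omega n})"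
    by (intro finite_UN_I) (auto intro!: finite_set_of_finite_maps intro: finite_subset[OF _ finite_Omega])
  ultimately show ?thesis by (rule finite_subset)
qed

lemma finite_AM: "finite (AM n)"
  using finite_PI by (rule finite_subset[rotated]) (auto simp: AM_def AI_def)

definition opv :: "nat \<Rightarrow> nat \<Rightarrow> nat \<Rightarrow> nat" where
  "opv i j x = (let r = (if x < i then x else x - 1) in if r < j then r else r + 1)"

lemma opmap_apply: "opmap n i j x = (if 1 \<le> x \<and> x \<le> n \<and> x \<noteq> i then Some (opv i j x) else None)"
  by (simp add: opmap_def opv_def Let_def)

lemma dom_opmap[simp]: "dom (opmap n i j) = Omega n - {i}"
  by (auto simp: opmap_apply split: if_splits)

lemma opv_range: "1 \<le> x \<Longrightarrow> x \<le> n \<Longrightarrow> x \<noteq> i \<Longrightarrow> 1 \<le> i \<Longrightarrow> i \<le> n \<Longrightarrow> 1 \<le> j \<Longrightarrow> j \<le> n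
   \<Longrightarrow> 1 \<le> opv i j x \<and> opv i j x \<le> n \<and> opv i j x \<noteq> j"
  unfolding opv_def Let_def by (auto split: if_splits)

lemma opv_conj: "1 \<le> x \<Longrightarrow> x \<le> n \<Longrightarrow> x \<noteq> n + 1 - i \<Longrightarrow> 1 \<le> i \<Longrightarrow> i \<le> n \<Longrightarrow> 1 \<le> j \<Longrightarrow> j \<le> n
   \<Longrightarrow> n + 1 - opv i j (n + 1 - x) = opv (n + 1 - i) (n + 1 - j) x"
  unfolding opv_def Let_def by (auto split: if_splits)


lemma opv_mono: "x < y \<Longrightarrow> x \<noteq> i \<Longrightarrow> y \<noteq> i \<Longrightarrow> opv i j x < opv i j y"
  unfolding opv_def Let_def by (auto split: if_splits)

lemma opmap_Some: "x \<in> Omega n - {i} \<Longrightarrow> opmap n i j x = Some (opv i j x)"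
  by (simp add: opmap_apply)

lemma ran_eq_image: "ran a = (\<lambda>x. the (a x)) ` dom a"
  by (force simp: ran_def dom_def)

lemma card_ran: assumes "a \<in> PI n" shows "card (ran a) = card (dom a)"
proof -
  have "inj_on (\<lambda>x. the (a x)) (dom a)"
    using PI_D(3)[OF assms] by (auto simp: inj_on_def dom_def)
  thus ?thesis by (simp add: ran_eq_image card_image)
qed

lemma opmap_PI: assumes "i \<in> Omega n" "j \<in> Omega n" shows "opmap n i j \<in> PI n"
proof -
  have "ran (opmap n i j) \<subseteq> Omega n"
    using assms opv_range by (auto simp: ran_def opmap_apply split: if_splits)
  moreover have "inj_on (opmap n i j) (dom (opmap n i j))"
  proof (rule inj_onI)
    fix x y assume "x \<in> dom (opmap n i j)" "y \<in> dom (opmap n i j)" "opmap n i j x = opmap n i j y"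
    then have "opv i j x = opv i j y" "x \<noteq> i" "y \<noteq> i" by (auto simp: opmap_apply split: if_splits)
    then show "x = y" using opv_mono by (metis less_irrefl nat_neq_iff)
  qed
  ultimately show ?thesis by (auto simp: PI_def)
qed

lemma opmap_op: "order_preserving (opmap n i j)"
  unfolding order_preserving_def
proof (intro ballI impI)
  fix x y assume "x \<in> dom (opmap n i j)" "y \<in> dom (opmap n i j)" "x \<le> y"
  then show "the (opmap n i j x) \<le> the (opmap n i j y)"
    using opv_mono[of x y i j] by (cases "x = y") (auto simp: opmap_apply)
qed

lemma ran_sub_eq: assumes "a \<in> PI n" "ran a \<subseteq> Omega n - {j}" "card (dom a) = n - 1" "j \<in> Omega n"
  shows "ran a = Omega n - {j}"
proof (rule card_subset_eq)
  show "finite (Omega n - {j})" by simp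
  show "card (ran a) = card (Omega n - {j})" using card_ran[OF assms(1)] assms(3,4) by simp
qed (use assms in auto)

lemma ran_opmap: assumes "i \<in> Omega n" "j \<in> Omega n" shows "ran (opmap n i j) = Omega n - {j}"
proof (rule ran_sub_eq[OF opmap_PI[OF assms]])
  show "ran (opmap n i j) \<subseteq> Omega n - {j}"
    using assms opv_range by (auto simp: ran_def opmap_apply split: if_splits)
qed (use assms in auto)

lemma card_less_Omega: "x \<in> Omega n \<Longrightarrow> card {y \<in> Omega n. y < x} = x - 1"
proof -
  assume "x \<in> Omega n"
  then have "{y \<in> Omega n. y < x} = {1..<x}" by auto
  then show ?thesis by simp
qed

lemma card_less_X: "x \<in> Omega n \<Longrightarrow> i \<in> Omega n \<Longrightarrow> card {y \<in> Omega n - {i}. y < x} = x - 1 - (if i < x then 1 else 0)"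
proof -
  assume "x \<in> Omega n" "i \<in> Omega n"
  then have "{y \<in> Omega n - {i}. y < x} = {1..<x} - {i}" by auto
  then show ?thesis using \<open>i \<in> Omega n\<close> by (simp add: card_Diff_singleton_if)
qed

lemma count_lemma: assumes "a \<in> PI n" "order_preserving a" "x \<in> dom a"
  shows "card {y \<in> dom a. y < x} = card {z \<in> ran a. z < the (a x)}"
proof (rule bij_betw_same_card[of "\<lambda>y. the (a y)"])
  have inj: "inj_on a (dom a)" using PI_D(3)[OF assms(1)] .
  have op: "\<And>u v. u \<in> dom a \<Longrightarrow> v \<in> dom a \<Longrightarrow> u \<le> v \<Longrightarrow> the (a u) \<le> the (a v)"
    using assms(2) by (auto simp: order_preserving_def)
  have eqv: "\<And>u v. u \<in> dom a \<Longrightarrow> v \<in> dom a \<Longrightarrow> the (a u) = the (a v) \<Longrightarrow> u = v"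
    using inj by (metis domD inj_onD option.sel)
  show "bij_betw (\<lambda>y. the (a y)) {y \<in> dom a. y < x} {z \<in> ran a. z < the (a x)}"
    unfolding bij_betw_def
  proof (intro conjI)
    show "inj_on (\<lambda>y. the (a y)) {y \<in> dom a. y < x}" using eqv by (auto simp: inj_on_def)
    show "(\<lambda>y. the (a y)) ` {y \<in> dom a. y < x} = {z \<in> ran a. z < the (a x)}"
    proof
      show "(\<lambda>y. the (a y)) ` {y \<in> dom a. y < x} \<subseteq> {z \<in> ran a. z < the (a x)}"
      proof -
        have "the (a y) \<in> ran a \<and> the (a y) < the (a x)" if y: "y \<in> dom a" "y < x" for y
        proof -
        have "the (a y) \<le> the (a x)" using op y assms(3) by simp
        moreover have "the (a y) \<noteq> the (a x)" using eqv y assms(3) by fastforce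
        moreover have "the (a y) \<in> ran a" using y by (auto simp: ran_eq_image)
        ultimately show "the (a y) \<in> ran a \<and> the (a y) < the (a x)" by simp
        qed
        then show ?thesis by blast
      qed
      show "{z \<in> ran a. z < the (a x)} \<subseteq> (\<lambda>y. the (a y)) ` {y \<in> dom a. y < x}"
      proof clarify
        fix z assume z: "z \<in> ran a" "z < the (a x)"
        then obtain y where y: "y \<in> dom a" "z = the (a y)" by (auto simp: ran_eq_image)
        have "y < x" using op[OF assms(3) y(1)] z y by (meson not_le)
        then show "z \<in> (\<lambda>y. the (a y)) ` {y \<in> dom a. y < x}" using y by auto
      qed
    qed
  qed
qed

lemma OPU: assumes "a \<in> PI n" "order_preserving a" "dom a = Omega n - {i}" "ran a = Omega n - {j}"
   "i \<in> Omega n" "j \<in> Omega n"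
  shows "a = opmap n i j"
proof (rule ext)
  fix x show "a x = opmap n i j x"
  proof (cases "x \<in> dom a")
    case False
    have "a x = None" using False by (simp add: domIff)
    moreover have "opmap n i j x = None" using False assms(3) by (auto simp: opmap_apply)
    ultimately show ?thesis by simp
  next
    case True
    then obtain w where w: "a x = Some w" by auto
    have "w \<in> ran a" using w by (auto simp: ran_def)
    then have wr: "w \<in> Omega n - {j}" using assms(4) by simp
    have "card {y \<in> dom a. y < x} = card {z \<in> ran a. z < w}" using count_lemma[OF assms(1,2) True] w by simp
    then have "x - 1 - (if i < x then 1 else 0) = w - 1 - (if j < w then 1 else 0)"
      using card_less_X[of x n i] card_less_X[of w n j] True assms wr by auto
    moreover have "1 \<le> i" "1 \<le> j" "1 \<le> x" "x \<noteq> i" "w \<noteq> j" "1 \<le> w"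
      using assms(5,6) True assms(3) wr by auto
    ultimately have "w = opv i j x" unfolding opv_def Let_def by (auto split: if_splits)
    then show ?thesis using w True assms(3) by (simp add: opmap_apply)
  qed
qed

lemma OPU_full: assumes "a \<in> PI n" "order_preserving a" "dom a = Omega n"
  shows "a = pid n"
proof -
  have ranr: "ran a = Omega n"
    using card_ran[OF assms(1)] assms(3) PI_D(2)[OF assms(1)] by (simp add: card_subset_eq)
  show ?thesis
  proof (rule ext)
    fix x show "a x = pid n x"
    proof (cases "x \<in> dom a")
      case False then show ?thesis using assms(3) by (auto simp: pid_def domIff)
    next
      case True
      then obtain w where w: "a x = Some w" by auto
      have "w \<in> ran a" using w by (auto simp: ran_def)
      then have wr: "w \<in> Omega n" using ranr by simp
      have "card {y \<in> dom a. y < x} = card {z \<in> ran a. z < w}" using count_lemma[OF assms(1,2) True] w by simp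
      then have "x - 1 = w - 1" using card_less_Omega[of x n] card_less_Omega[of w n] True assms(3) ranr wr by simp
      then have "w = x" using wr True assms(3) by auto
      then show ?thesis using w True assms(3) by (simp add: pid_def)
    qed
  qed
qed

lemma dom_pcomp_full: "ran a \<subseteq> dom b \<Longrightarrow> dom (pcomp a b) = dom a"
  by (auto simp: dom_pcomp ran_def)

lemma opmap_comp: assumes "i \<in> Omega n" "j \<in> Omega n" "k \<in> Omega n"
  shows "pcomp (opmap n i j) (opmap n j k) = opmap n i k"
proof (rule OPU)
  show P: "pcomp (opmap n i j) (opmap n j k) \<in> PI n" using opmap_PI assms pcomp_PI by blast
  show "order_preserving (pcomp (opmap n i j) (opmap n j k))" by (intro op_comp_pp opmap_op)
  show D: "dom (pcomp (opmap n i j) (opmap n j k)) = Omega n - {i}"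
    using dom_pcomp_full[of "opmap n i j" "opmap n j k"] ran_opmap[OF assms(1,2)] by simp
  show "ran (pcomp (opmap n i j) (opmap n j k)) = Omega n - {k}"
  proof (rule ran_sub_eq[OF P])
    show "ran (pcomp (opmap n i j) (opmap n j k)) \<subseteq> Omega n - {k}"
      using ran_pcomp_sub ran_opmap[OF assms(2,3)] by blast
  qed (use D assms in auto)
qed (use assms in auto)

lemma A1: "x \<noteq> i \<Longrightarrow> x \<noteq> (if t < i then t else t + 1) \<Longrightarrow> 1 \<le> t \<Longrightarrow>
   opv i t x \<noteq> t + 1 \<and> opv (t + 1) j (opv i t x) = opv i j x"
  unfolding opv_def Let_def by (auto split: if_splits)

lemma A2: "1 \<le> t \<Longrightarrow> opv i t (if t < i then t else t + 1) = t + 1"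
  unfolding opv_def Let_def by (auto split: if_splits)

lemma B1: "x \<noteq> i \<Longrightarrow> x \<noteq> (if t < i then t else t + 1) \<Longrightarrow> 1 \<le> t \<Longrightarrow>
   opv i (t + 1) x \<noteq> t \<and> opv t j (opv i (t + 1) x) = opv i j x"
  unfolding opv_def Let_def by (auto split: if_splits)

lemma B2: "1 \<le> t \<Longrightarrow> opv i (t + 1) (if t < i then t else t + 1) = t"
  by (cases "t < i") (simp_all add: opv_def Let_def)

lemma E_ne: "1 \<le> (t::nat) \<Longrightarrow> (if t < i then t else t + 1) \<noteq> i" by (cases "t < i") auto

lemma restr1: assumes "i \<in> Omega n" "j \<in> Omega n" "1 \<le> t" "t + 1 \<le> n"
  shows "pcomp (opmap n i t) (opmap n (t+1) j) = opmap n i j |` (Omega n - {i} - {if t < i then t else t + 1})"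
proof (rule ext)
  fix x
  let ?e = "if t < i then t else t + 1"
  show "pcomp (opmap n i t) (opmap n (t+1) j) x = (opmap n i j |` (Omega n - {i} - {?e})) x"
  proof (cases "x \<in> Omega n - {i} - {?e}")
    case True
    then have r: "opv i t x \<in> Omega n" using opv_range[of x n i t] assms by auto
    show ?thesis using True A1[of x i t j] assms r by (auto simp: pcomp_apply opmap_apply)
  next
    case False
    show ?thesis
    proof (cases "x = ?e")
      case True
      then have "x \<in> Omega n - {i}" using assms E_ne[of t i] by auto
      then show ?thesis using True A2[of t i] assms by (auto simp: pcomp_apply opmap_apply)
    qed (use False in \<open>auto simp: pcomp_apply opmap_apply\<close>)
  qed
qed

lemma restr2: assumes "i \<in> Omega n" "j \<in> Omega n" "1 \<le> t" "t + 1 \<le> n"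
  shows "pcomp (opmap n i (t+1)) (opmap n t j) = opmap n i j |` (Omega n - {i} - {if t < i then t else t + 1})"
proof (rule ext)
  fix x
  let ?e = "if t < i then t else t + 1"
  show "pcomp (opmap n i (t+1)) (opmap n t j) x = (opmap n i j |` (Omega n - {i} - {?e})) x"
  proof (cases "x \<in> Omega n - {i} - {?e}")
    case True
    then have r: "opv i (t+1) x \<in> Omega n" using opv_range[of x n i "t+1"] assms by auto
    show ?thesis using True B1[of x i t j] assms r by (auto simp: pcomp_apply opmap_apply)
  next
    case False
    show ?thesis
    proof (cases "x = ?e")
      case True
      then have "x \<in> Omega n - {i}" using assms E_ne[of t i] by auto
      then show ?thesis using True B2[of t i] assms by (auto simp: pcomp_apply opmap_apply)
    qed (use False in \<open>auto simp: pcomp_apply opmap_apply\<close>)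
  qed
qed

lemma hmap_apply: "hmap n x = (if 1 \<le> x \<and> x \<le> n then Some (n + 1 - x) else None)"
  by (simp add: hmap_def)

lemma dom_hmap[simp]: "dom (hmap n) = Omega n"
  by (auto simp: hmap_apply split: if_splits)

lemma hmap_PI: "hmap n \<in> PI n"
  by (auto simp: PI_def hmap_apply ran_def inj_on_def split: if_splits)

lemma hmap_rev: "order_reversing (hmap n)"
  by (auto simp: order_reversing_def hmap_apply split: if_splits)

lemma hh: "pcomp (hmap n) (hmap n) = pid n"
  by (rule ext) (auto simp: pcomp_apply hmap_apply pid_def)

definition cperm :: "nat \<Rightarrow> nat \<Rightarrow> nat \<Rightarrow> nat" where
  "cperm i j x = (if x = i then j else if j \<le> x \<and> x < i then x + 1 else if i < x \<and> x \<le> j then x - 1 else x)"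

lemma cperm_up: "i \<le> j \<Longrightarrow> cperm i (Suc j) = transpose j (Suc j) \<circ> cperm i j"
  by (rule ext) (auto simp: cperm_def transpose_def)

lemma cperm_id: "cperm i i = id"
  by (rule ext) (auto simp: cperm_def)

lemma cperm_le: "1 \<le> i \<Longrightarrow> j \<le> n \<Longrightarrow> i \<le> j \<Longrightarrow>
   cperm i j permutes Omega n \<and> (evenperm (cperm i j) \<longleftrightarrow> even (i + j))"
proof (induction j)
  case 0 then show ?case by simp
next
  case (Suc j)
  show ?case
  proof (cases "i = Suc j")
    case True
    have "cperm i (Suc j) permutes Omega n" unfolding True by (simp only: cperm_id permutes_id)
    moreover have "evenperm (cperm i (Suc j))" unfolding True by (simp only: cperm_id evenperm_id)
    ultimately show ?thesis using True by simp
  next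
    case False
    then have ij: "i \<le> j" using Suc by simp
    then have IH: "cperm i j permutes Omega n" "evenperm (cperm i j) \<longleftrightarrow> even (i + j)" using Suc by auto
    have T: "transpose j (Suc j) permutes Omega n" using Suc ij by (intro permutes_swap_id) auto
    have "cperm i (Suc j) permutes Omega n" unfolding cperm_up[OF ij] by (rule permutes_compose[OF IH(1) T])
    moreover have "evenperm (cperm i (Suc j)) \<longleftrightarrow> even (i + Suc j)"
      unfolding cperm_up[OF ij]
      using evenperm_comp[OF permutes_imp_permutation[OF finite_Omega T] permutes_imp_permutation[OF finite_Omega IH(1)]]
        IH(2) evenperm_swap[of j "Suc j"] by simp
    ultimately show ?thesis by simp
  qed
qed

lemma cperm_inv_comp: "cperm i j \<circ> cperm j i = id"
  by (rule ext) (auto simp: cperm_def)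

lemma cperm_props: assumes "i \<in> Omega n" "j \<in> Omega n"
  shows "cperm i j permutes Omega n \<and> (evenperm (cperm i j) \<longleftrightarrow> even (i + j))"
proof (cases "i \<le> j")
  case True then show ?thesis using cperm_le assms by auto
next
  case False
  have "1 \<le> j" "i \<le> n" "j \<le> i" using False assms by auto
  then have P: "cperm j i permutes Omega n" "evenperm (cperm j i) \<longleftrightarrow> even (j + i)" using cperm_le[of j i n] by auto
  have I: "inv (cperm j i) = cperm i j" by (rule inv_unique_comp) (simp_all add: cperm_inv_comp)
  have "cperm i j permutes Omega n" using permutes_inv[OF P(1)] unfolding I .
  moreover have "evenperm (cperm i j) = evenperm (cperm j i)"
    using evenperm_inv[OF permutes_imp_permutation[OF finite_Omega P(1)]] unfolding I .
  ultimately show ?thesis using P(2) by (simp add: add.commute)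
qed

lemma opv_cperm: "x \<noteq> i \<Longrightarrow> opv i j x = cperm i j x"
  unfolding opv_def cperm_def Let_def by auto

lemma opmap_AM: assumes "i \<in> Omega n" "j \<in> Omega n" "even (i + j)" shows "opmap n i j \<in> AM n"
proof -
  have "opmap n i j \<in> AI n" unfolding AI_def
    using opmap_PI[OF assms(1,2)] cperm_props[OF assms(1,2)] assms(3)
    by (auto intro!: exI[of _ "cperm i j"] simp: opmap_apply opv_cperm split: if_splits)
  then show ?thesis using opmap_PI[OF assms(1,2)] opmap_op by (simp add: AM_def PMI_def)
qed

lemma opmap_AI_parity: assumes "opmap n i j \<in> AI n" "i \<in> Omega n" "j \<in> Omega n" shows "even (i + j)"
proof -
  obtain s where s: "s permutes Omega n" "evenperm s" "\<forall>x\<in>dom (opmap n i j). opmap n i j x = Some (s x)"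
    using assms(1) by (auto simp: AI_def)
  have sv: "\<And>x. x \<in> Omega n - {i} \<Longrightarrow> s x = opv i j x" using s(3) by (auto simp: opmap_apply)
  have si: "s i = j"
  proof (rule ccontr)
    assume "s i \<noteq> j"
    moreover have "s i \<in> Omega n" using permutes_in_image[OF s(1)] assms(2) by simp
    ultimately have "s i \<in> ran (opmap n i j)" using ran_opmap[OF assms(2,3)] by simp
    then obtain y where y: "opmap n i j y = Some (s i)" by (auto simp: ran_def)
    then have "y \<in> Omega n - {i}" by (auto simp: opmap_apply split: if_splits)
    then have "s y = s i" using y s(3) by (metis domI option.inject)
    then have "y = i" using permutes_inj[OF s(1)] by (auto dest: injD)
    then show False using \<open>y \<in> Omega n - {i}\<close> by simp
  qed
  have "s = cperm i j"
  proof (rule ext)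
    fix x show "s x = cperm i j x"
    proof (cases "x \<in> Omega n")
      case True then show ?thesis using si sv[of x] opv_cperm[of x i j] by (cases "x = i") (auto simp: cperm_def)
    next
      case False
      then have "s x = x" using permutes_not_in[OF s(1)] by simp
      moreover have "cperm i j x = x" using False assms(2,3) by (auto simp: cperm_def)
      ultimately show ?thesis by simp
    qed
  qed
  then show ?thesis using s(2) cperm_props[OF assms(2,3)] by simp
qed

definition hp :: "nat \<Rightarrow> nat \<Rightarrow> nat \<Rightarrow> nat" where
  "hp n k x = (if (1 \<le> x \<and> x \<le> k) \<or> (n + 1 - k \<le> x \<and> x \<le> n) then n + 1 - x else x)"

lemma hp_step: "2 * (k + 1) \<le> n \<Longrightarrow> hp n (Suc k) = transpose (Suc k) (n - k) \<circ> hp n k"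
  by (rule ext) (auto simp: hp_def transpose_def)

lemma hp_props: "2 * k \<le> n \<Longrightarrow> hp n k permutes Omega n \<and> (evenperm (hp n k) \<longleftrightarrow> even k)"
proof (induction k)
  case 0
  have "hp n 0 = id" by (rule ext) (auto simp: hp_def)
  then show ?case by (simp only: permutes_id evenperm_id) simp
next
  case (Suc k)
  then have IH: "hp n k permutes Omega n" "evenperm (hp n k) \<longleftrightarrow> even k" by auto
  have T: "transpose (Suc k) (n - k) permutes Omega n" using Suc by (intro permutes_swap_id) auto
  have "Suc k \<noteq> n - k" using Suc by simp
  have st: "hp n (Suc k) = transpose (Suc k) (n - k) \<circ> hp n k" using hp_step Suc by simp
  have "hp n (Suc k) permutes Omega n" unfolding st by (rule permutes_compose[OF IH(1) T])
  moreover have "evenperm (hp n (Suc k)) \<longleftrightarrow> even (Suc k)"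
    unfolding st
    using evenperm_comp[OF permutes_imp_permutation[OF finite_Omega T] permutes_imp_permutation[OF finite_Omega IH(1)]]
      IH(2) evenperm_swap[of "Suc k" "n - k"] Suc by (simp add: \<open>Suc k \<noteq> n - k\<close>)
  ultimately show ?case by simp
qed

lemma hmap_AM: assumes "n mod 4 = 1" shows "hmap n \<in> AM n"
proof -
  have "n = 4 * (n div 4) + 1" using assms by presburger
  then obtain m where m: "n = 4 * m + 1" by blast
  have P: "hp n (2 * m) permutes Omega n" "evenperm (hp n (2 * m))" using hp_props[of "2 * m" n] m by auto
  have H: "\<And>x. x \<in> Omega n \<Longrightarrow> hp n (2 * m) x = n + 1 - x"
  proof -
    fix x assume "x \<in> Omega n"
    then have "1 \<le> x" "x \<le> n" by auto
    then show "hp n (2 * m) x = n + 1 - x" unfolding hp_def m by auto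
  qed
  have "\<forall>x\<in>dom (hmap n). hmap n x = Some (hp n (2 * m) x)"
  proof
    fix x assume "x \<in> dom (hmap n)"
    then have "x \<in> Omega n" using dom_hmap by blast
    then show "hmap n x = Some (hp n (2 * m) x)" using H[of x] by (simp add: hmap_apply)
  qed
  then have "hmap n \<in> AI n" unfolding AI_def using hmap_PI P by blast
  then show ?thesis using hmap_PI hmap_rev by (simp add: AM_def PMI_def)
qed

lemma xgen_eq: "3 \<le> i \<Longrightarrow> xgen n i = opmap n i (i - 2)"
  by (simp add: xgen_def)

lemma opmap_ran_sub: "i \<in> Omega n \<Longrightarrow> j \<in> Omega n \<Longrightarrow> ran (opmap n i j) \<subseteq> Omega n"
  using ran_opmap by auto

lemma plist_lemma: "1 \<le> k \<Longrightarrow> 2 * k + 1 \<le> a \<Longrightarrow> a \<le> n \<Longrightarrow>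
   plist_prod n (map (\<lambda>k'. xgen n (a - 2 * k')) [0..<k]) = opmap n a (a - 2 * k)"
proof (induction k arbitrary: a)
  case 0 then show ?case by simp
next
  case (Suc k)
  show ?case
  proof (cases "k = 0")
    case True
    have "ran (opmap n a (a - 2)) \<subseteq> Omega n" by (rule opmap_ran_sub) (use Suc.prems True in auto)
    then have "pcomp (opmap n a (a - 2)) (pid n) = opmap n a (a - 2)" by (rule pcomp_pid_right)
    then show ?thesis using Suc.prems True
      by (simp add: plist_prod_def xgen_eq)
  next
    case False
    have IH: "plist_prod n (map (\<lambda>k'. xgen n (a - 2 - 2 * k')) [0..<k]) = opmap n (a - 2) (a - 2 - 2 * k)"
      using Suc.IH[of "a - 2"] Suc.prems False by simp
    have L: "[0..<Suc k] = 0 # map Suc [0..<k]" by (simp add: map_Suc_upt upt_conv_Cons del: upt_Suc)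
    have "map (\<lambda>k'. xgen n (a - 2 * k')) [0..<Suc k] = xgen n a # map (\<lambda>k'. xgen n (a - 2 - 2 * k')) [0..<k]"
      unfolding L by (simp add: o_def)
    then have "plist_prod n (map (\<lambda>k'. xgen n (a - 2 * k')) [0..<Suc k]) =
        pcomp (xgen n a) (plist_prod n (map (\<lambda>k'. xgen n (a - 2 - 2 * k')) [0..<k]))"
      by (simp add: plist_prod_def)
    also have "\<dots> = pcomp (opmap n a (a - 2)) (opmap n (a - 2) (a - 2 - 2 * k))"
      using IH Suc.prems by (simp add: xgen_eq)
    also have "\<dots> = opmap n a (a - 2 - 2 * k)"
      using Suc.prems by (intro opmap_comp) auto
    finally show ?thesis by (simp add: algebra_simps)
  qed
qed

lemma conj_opmap: assumes "i \<in> Omega n" "j \<in> Omega n"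
  shows "pcomp (pcomp (hmap n) (opmap n i j)) (hmap n) = opmap n (n + 1 - i) (n + 1 - j)"
proof (rule ext)
  fix z
  show "pcomp (pcomp (hmap n) (opmap n i j)) (hmap n) z = opmap n (n + 1 - i) (n + 1 - j) z"
  proof (cases "z \<in> Omega n \<and> z \<noteq> n + 1 - i")
    case True
    then have y: "n + 1 - z \<in> Omega n" "n + 1 - z \<noteq> i" using assms by auto
    have r: "opv i j (n + 1 - z) \<in> Omega n" using opv_range[of "n + 1 - z" n i j] y assms by auto
    have "pcomp (pcomp (hmap n) (opmap n i j)) (hmap n) z = Some (n + 1 - opv i j (n + 1 - z))"
      using True y r by (simp add: pcomp_apply hmap_apply opmap_apply)
    also have "\<dots> = Some (opv (n + 1 - i) (n + 1 - j) z)" using opv_conj[of z n i j] True assms by simp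
    finally show ?thesis using True by (simp add: opmap_apply)
  next
    case False
    have "opmap n (n + 1 - i) (n + 1 - j) z = None" using False by (simp add: opmap_apply)
    moreover have "pcomp (pcomp (hmap n) (opmap n i j)) (hmap n) z = None"
    proof (cases "z \<in> Omega n")
      case True
      then have "z = n + 1 - i" using False by simp
      then have "n + 1 - z = i" using assms by simp
      then show ?thesis using True by (simp add: pcomp_apply hmap_apply opmap_apply)
    next
      case False
      then have "hmap n z = None" by (simp add: hmap_apply)
      then show ?thesis by (simp add: pcomp_apply)
    qed
    ultimately show ?thesis by simp
  qed
qed

locale L =
  fixes n m :: nat
  assumes nm: "n = 4 * m + 1" and m1: "1 \<le> m"
begin

lemma nmod: "n mod 4 = 1" using nm by simp

lemma genset_eq: "genset n = {hmap n} \<union> {opmap n i (i - 2) | i. 2 * m + 3 \<le> i \<and> i \<le> n}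
   \<union> {opmap n (2 * m + 2) 2, opmap n (2 * m + 1) 1}"
proof -
  have a: "(n + 5) div 2 = 2 * m + 3" "(n + 3) div 2 = 2 * m + 2" "(n + 1) div 2 = 2 * m + 1" "(n - 1) div 4 = m"
    using nm by auto
  have p1: "plist_prod n (map (\<lambda>k. xgen n ((n + 3) div 2 - 2 * k)) [0..<(n - 1) div 4]) = opmap n (2 * m + 2) 2"
    unfolding a using plist_lemma[of m "2 * m + 2" n] m1 nm by simp
  have p2: "plist_prod n (map (\<lambda>k. xgen n ((n + 1) div 2 - 2 * k)) [0..<(n - 1) div 4]) = opmap n (2 * m + 1) 1"
    unfolding a using plist_lemma[of m "2 * m + 1" n] m1 nm by simp
  have x: "{xgen n i | i. (n + 5) div 2 \<le> i \<and> i \<le> n} = {opmap n i (i - 2) | i. 2 * m + 3 \<le> i \<and> i \<le> n}"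
    unfolding a
  proof (rule set_eqI, rule iffI)
    fix z assume "z \<in> {xgen n i | i. 2 * m + 3 \<le> i \<and> i \<le> n}"
    then obtain i where "z = xgen n i" "2 * m + 3 \<le> i" "i \<le> n" by blast
    then show "z \<in> {opmap n i (i - 2) | i. 2 * m + 3 \<le> i \<and> i \<le> n}" by (auto simp: xgen_eq)
  next
    fix z assume "z \<in> {opmap n i (i - 2) | i. 2 * m + 3 \<le> i \<and> i \<le> n}"
    then obtain i where "z = opmap n i (i - 2)" "2 * m + 3 \<le> i" "i \<le> n" by blast
    then have "z = xgen n i" "2 * m + 3 \<le> i" "i \<le> n" by (auto simp: xgen_eq)
    then show "z \<in> {xgen n i | i. 2 * m + 3 \<le> i \<and> i \<le> n}" by blast
  qed
  show ?thesis unfolding genset_def p1 p2 x by simp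
qed

lemma genset_AM: "genset n \<subseteq> AM n"
  unfolding genset_eq using hmap_AM[OF nmod] nm m1
  by (auto intro!: opmap_AM)

abbreviation "M \<equiv> gen n (genset n)"

lemma M_mult: "a \<in> M \<Longrightarrow> b \<in> M \<Longrightarrow> pcomp a b \<in> M"
  by (rule gen_mult[OF genset_AM])

lemma M_base: "a \<in> genset n \<Longrightarrow> a \<in> M"
  by (rule gen_base[OF _ genset_AM])

lemma M_h: "hmap n \<in> M"
  by (rule M_base) (simp add: genset_eq)

lemma M_conj: "a \<in> M \<Longrightarrow> pcomp (pcomp (hmap n) a) (hmap n) \<in> M"
  by (intro M_mult M_h)

definition R where "R i j \<longleftrightarrow> opmap n i j \<in> M"

lemma R_trans: "R i j \<Longrightarrow> R j k \<Longrightarrow> i \<in> Omega n \<Longrightarrow> j \<in> Omega n \<Longrightarrow> k \<in> Omega n \<Longrightarrow> R i k"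
proof -
  assume a: "R i j" "R j k" "i \<in> Omega n" "j \<in> Omega n" "k \<in> Omega n"
  have "pcomp (opmap n i j) (opmap n j k) \<in> M" using a(1,2) unfolding R_def by (rule M_mult)
  then show "R i k" unfolding R_def using opmap_comp[OF a(3,4,5)] by simp
qed

lemma R_conj: "R i j \<Longrightarrow> i \<in> Omega n \<Longrightarrow> j \<in> Omega n \<Longrightarrow> R (n + 1 - i) (n + 1 - j)"
proof -
  assume a: "R i j" "i \<in> Omega n" "j \<in> Omega n"
  have "pcomp (pcomp (hmap n) (opmap n i j)) (hmap n) \<in> M" using a(1) unfolding R_def by (rule M_conj)
  then show ?thesis unfolding R_def using conj_opmap[OF a(2,3)] by simp
qed

lemma R_edge: "2 * m + 3 \<le> i \<Longrightarrow> i \<le> n \<Longrightarrow> R i (i - 2)"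
proof -
  assume "2 * m + 3 \<le> i" "i \<le> n"
  then have "opmap n i (i - 2) \<in> genset n" unfolding genset_eq by blast
  then show ?thesis unfolding R_def by (rule M_base)
qed

lemma R_P1: "R (2 * m + 2) 2"
  unfolding R_def by (rule M_base) (simp add: genset_eq)

lemma R_P2: "R (2 * m + 1) 1"
  unfolding R_def by (rule M_base) (simp add: genset_eq)

lemma R_edge_up: "1 \<le> j \<Longrightarrow> j + 2 \<le> 2 * m + 1 \<Longrightarrow> R j (j + 2)"
proof -
  assume a: "1 \<le> j" "j + 2 \<le> 2 * m + 1"
  have "R (n + 1 - j) (n + 1 - j - 2)" using a nm by (intro R_edge) auto
  then have "R (n + 1 - (n + 1 - j)) (n + 1 - (n + 1 - j - 2))" using a nm by (intro R_conj) auto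
  moreover have "n + 1 - (n + 1 - j) = j" "n + 1 - (n + 1 - j - 2) = j + 2" using a nm by auto
  ultimately show ?thesis by simp
qed

lemma R_down: "2 * m + 1 \<le> b \<Longrightarrow> b + 2 * (d + 1) \<le> n \<Longrightarrow> R (b + 2 * (d + 1)) b"
proof (induction d arbitrary: b)
  case 0 then show ?case using R_edge[of "b + 2"] by simp
next
  case (Suc d)
  have r1: "R (b + 2 + 2 * (d + 1)) (b + 2)" using Suc.IH[of "b + 2"] Suc.prems by simp
  have r2: "R (b + 2) b" using R_edge[of "b + 2"] Suc by simp
  have "b + 2 + 2 * (d + 1) \<in> Omega n" "b + 2 \<in> Omega n" "b \<in> Omega n" using Suc.prems nm by auto
  then have "R (b + 2 + 2 * (d + 1)) b" using R_trans[OF r1 r2] by blast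
  then show ?case by (simp add: algebra_simps)
qed

lemma R_up: "1 \<le> a \<Longrightarrow> a + 2 * (d + 1) \<le> 2 * m + 1 \<Longrightarrow> R a (a + 2 * (d + 1))"
proof (induction d arbitrary: a)
  case 0 then show ?case using R_edge_up[of a] by simp
next
  case (Suc d)
  have r1: "R (a + 2) (a + 2 + 2 * (d + 1))" using Suc.IH[of "a + 2"] Suc.prems by simp
  have r2: "R a (a + 2)" using R_edge_up[of a] Suc by simp
  have "a \<in> Omega n" "a + 2 \<in> Omega n" "a + 2 + 2 * (d + 1) \<in> Omega n" using Suc.prems nm by auto
  then have "R a (a + 2 + 2 * (d + 1))" using R_trans[OF r2 r1] by blast
  then show ?case by (simp add: algebra_simps)
qed

lemma R_down': "2 * m + 1 \<le> b \<Longrightarrow> b < x \<Longrightarrow> x \<le> n \<Longrightarrow> even (x - b) \<Longrightarrow> R x b"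
proof -
  assume a: "2 * m + 1 \<le> b" "b < x" "x \<le> n" "even (x - b)"
  then obtain q where q: "x - b = 2 * q" by (metis evenE)
  then have "x = b + 2 * ((q - 1) + 1)" using a by auto
  then obtain d where "x = b + 2 * (d + 1)" by blast
  then show ?thesis using R_down a by simp
qed

lemma even_gap: "(x::nat) < y \<Longrightarrow> even (y - x) \<Longrightarrow> \<exists>d. y = x + 2 * (d + 1)"
proof -
  assume a: "x < y" "even (y - x)"
  then obtain q where q: "y - x = 2 * q" by (metis evenE)
  then have "y = x + 2 * ((q - 1) + 1)" using a by auto
  then show ?thesis by blast
qed

lemma ext_up: "R z x \<Longrightarrow> z \<in> Omega n \<Longrightarrow> 1 \<le> x \<Longrightarrow> x \<le> y \<Longrightarrow> y \<le> 2 * m + 1 \<Longrightarrow> even (y - x) \<Longrightarrow> R z y"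
proof -
  assume a: "R z x" "z \<in> Omega n" "1 \<le> x" "x \<le> y" "y \<le> 2 * m + 1" "even (y - x)"
  show "R z y"
  proof (cases "x = y")
    case False
    then obtain d where d: "y = x + 2 * (d + 1)" using even_gap a by force
    have r: "R x y" using R_up[of x d] a d by simp
    have "x \<in> Omega n" "y \<in> Omega n" using a nm by auto
    then show ?thesis using R_trans[OF a(1) r] a(2) by blast
  qed (use a in simp)
qed

lemma ext_down: "R z x \<Longrightarrow> z \<in> Omega n \<Longrightarrow> 2 * m + 1 \<le> y \<Longrightarrow> y \<le> x \<Longrightarrow> x \<le> n \<Longrightarrow> even (x - y) \<Longrightarrow> R z y"
proof -
  assume a: "R z x" "z \<in> Omega n" "2 * m + 1 \<le> y" "y \<le> x" "x \<le> n" "even (x - y)"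
  show "R z y"
  proof (cases "x = y")
    case False
    then obtain d where d: "x = y + 2 * (d + 1)" using even_gap a by force
    have r: "R x y" using R_down[of y d] a d by simp
    have "x \<in> Omega n" "y \<in> Omega n" using a nm by auto
    then show ?thesis using R_trans[OF a(1) r] a(2) by blast
  qed (use a in simp)
qed

lemma pre_up: "R y z \<Longrightarrow> z \<in> Omega n \<Longrightarrow> 1 \<le> x \<Longrightarrow> x \<le> y \<Longrightarrow> y \<le> 2 * m + 1 \<Longrightarrow> even (y - x) \<Longrightarrow> R x z"
proof -
  assume a: "R y z" "z \<in> Omega n" "1 \<le> x" "x \<le> y" "y \<le> 2 * m + 1" "even (y - x)"
  show "R x z"
  proof (cases "x = y")
    case False
    then obtain d where d: "y = x + 2 * (d + 1)" using even_gap a by force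
    have r: "R x y" using R_up[of x d] a d by simp
    have "x \<in> Omega n" "y \<in> Omega n" using a nm by auto
    then show ?thesis using R_trans[OF r a(1)] a(2) by blast
  qed (use a in simp)
qed

lemma pre_down: "R y z \<Longrightarrow> z \<in> Omega n \<Longrightarrow> 2 * m + 1 \<le> y \<Longrightarrow> y \<le> x \<Longrightarrow> x \<le> n \<Longrightarrow> even (x - y) \<Longrightarrow> R x z"
proof -
  assume a: "R y z" "z \<in> Omega n" "2 * m + 1 \<le> y" "y \<le> x" "x \<le> n" "even (x - y)"
  show "R x z"
  proof (cases "x = y")
    case False
    then obtain d where d: "x = y + 2 * (d + 1)" using even_gap a by force
    have r: "R x y" using R_down[of y d] a d by simp
    have "x \<in> Omega n" "y \<in> Omega n" using a nm by auto
    then show ?thesis using R_trans[OF r a(1)] a(2) by blast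
  qed (use a in simp)
qed

lemma R_cn: "R (2 * m + 1) n"
proof -
  have "R (n + 1 - (2 * m + 1)) (n + 1 - 1)" using R_P2 nm by (intro R_conj) auto
  moreover have "n + 1 - (2 * m + 1) = 2 * m + 1" using nm by simp
  ultimately show ?thesis by simp
qed

lemma R_cX: "odd y \<Longrightarrow> y \<in> Omega n \<Longrightarrow> R (2 * m + 1) y"
proof -
  assume a: "odd y" "y \<in> Omega n"
  have c: "2 * m + 1 \<in> Omega n" using nm by auto
  show ?thesis
  proof (cases "y \<le> 2 * m + 1")
    case True
    then show ?thesis using ext_up[OF R_P2 c, of y] a by auto
  next
    case False
    then show ?thesis using ext_down[OF R_cn c, of y] a nm by auto
  qed
qed

lemma R_Xc: "odd x \<Longrightarrow> x \<in> Omega n \<Longrightarrow> R x (2 * m + 1)"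
proof -
  assume a: "odd x" "x \<in> Omega n"
  have c: "2 * m + 1 \<in> Omega n" using nm by auto
  have cc: "R (2 * m + 1) (2 * m + 1)" using R_cX c by simp
  show ?thesis
  proof (cases "x \<le> 2 * m + 1")
    case True
    then show ?thesis using pre_up[OF cc c, of x] a by auto
  next
    case False
    then show ?thesis using pre_down[OF cc c, of x] a nm by auto
  qed
qed

lemma R_e4m: "R (2 * m) (4 * m)"
proof -
  have "R (n + 1 - (2 * m + 2)) (n + 1 - 2)" using R_P1 nm m1 by (intro R_conj) auto
  moreover have "n + 1 - (2 * m + 2) = 2 * m" "n + 1 - 2 = 4 * m" using nm by auto
  ultimately show ?thesis by simp
qed

lemma R_eX: "even y \<Longrightarrow> y \<in> Omega n \<Longrightarrow> R (2 * m + 2) y"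
proof -
  assume a: "even y" "y \<in> Omega n"
  have e: "2 * m + 2 \<in> Omega n" using nm m1 by auto
  have low: "R (2 * m + 2) y'" if "even y'" "2 \<le> y'" "y' \<le> 2 * m" for y'
    using ext_up[OF R_P1 e, of y'] that by auto
  have r: "R (2 * m + 2) (2 * m)" using low m1 by auto
  have o: "2 * m \<in> Omega n" "4 * m \<in> Omega n" using nm m1 by auto
  have h: "R (2 * m + 2) (4 * m)" using R_trans[OF r R_e4m e o] .
  show ?thesis
  proof (cases "y \<le> 2 * m")
    case True
    moreover have "1 \<le> y" using a by simp
    then have "2 \<le> y" using a(1) by presburger
    ultimately show ?thesis using low a by auto
  next
    case False
    have "y \<le> n" using a by simp
    then have "2 * m + 2 \<le> y" "y \<le> 4 * m" using a(1) nm False by presburger+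
    then show ?thesis using ext_down[OF h e, of y] a nm by auto
  qed
qed

lemma R_Xe: "even x \<Longrightarrow> x \<in> Omega n \<Longrightarrow> R x (2 * m + 2)"
proof -
  assume a: "even x" "x \<in> Omega n"
  have e: "2 * m + 2 \<in> Omega n" using nm m1 by auto
  have ee: "R (2 * m + 2) (2 * m + 2)" using R_eX e by simp
  have hi: "R x' (2 * m + 2)" if "even x'" "2 * m + 2 \<le> x'" "x' \<le> n" for x'
    using pre_down[OF ee e, of x'] that by auto
  have r: "R (4 * m) (2 * m + 2)" using hi nm m1 by auto
  have o: "2 * m \<in> Omega n" "4 * m \<in> Omega n" using nm m1 by auto
  have l: "R (2 * m) (2 * m + 2)" using R_trans[OF R_e4m r o e] .
  show ?thesis
  proof (cases "x \<le> 2 * m")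
    case True
    then show ?thesis using pre_up[OF l e, of x] a by auto
  next
    case False
    then have "2 * m + 2 \<le> x" using a(1) by presburger
    then show ?thesis using hi a by auto
  qed
qed

lemma R_all: "i \<in> Omega n \<Longrightarrow> j \<in> Omega n \<Longrightarrow> even (i + j) \<Longrightarrow> R i j"
proof -
  assume a: "i \<in> Omega n" "j \<in> Omega n" "even (i + j)"
  show ?thesis
  proof (cases "even i")
    case True
    then have "even j" using a by simp
    have e: "2 * m + 2 \<in> Omega n" using nm m1 by auto
    show ?thesis using R_trans[OF R_Xe[OF True a(1)] R_eX[OF \<open>even j\<close> a(2)] a(1) e a(2)] .
  next
    case False
    then have "odd j" using a by simp
    have c: "2 * m + 1 \<in> Omega n" using nm by auto
    show ?thesis using R_trans[OF R_Xc[OF False a(1)] R_cX[OF \<open>odd j\<close> a(2)] a(1) c a(2)] .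
  qed
qed

lemma M_opmap: "i \<in> Omega n \<Longrightarrow> j \<in> Omega n \<Longrightarrow> even (i + j) \<Longrightarrow> opmap n i j \<in> M"
  using R_all unfolding R_def by blast

lemma pid_restr_X: "i \<in> Omega n \<Longrightarrow> pid n |` (Omega n - {i}) = opmap n i i"
  by (rule ext) (auto simp: restrict_map_def pid_def opmap_apply opv_def Let_def)

lemma pid_restr_step: "i \<in> Omega n \<Longrightarrow> i \<notin> D \<Longrightarrow> pid n |` D = pcomp (pid n |` insert i D) (opmap n i i)"
  by (rule ext) (auto simp: restrict_map_def pid_def opmap_apply opv_def Let_def pcomp_apply)

lemma M_pidr_aux: "\<forall>D. D \<subseteq> Omega n \<longrightarrow> card (Omega n - D) = Suc k \<longrightarrow> pid n |` D \<in> M"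
proof (induction k)
  case 0
  show ?case
  proof (intro allI impI)
    fix D assume D: "D \<subseteq> Omega n" "card (Omega n - D) = Suc 0"
    then obtain i where i: "Omega n - D = {i}" by (auto simp: card_Suc_eq)
    then have "D = Omega n - {i}" "i \<in> Omega n" using D by auto
    then show "pid n |` D \<in> M" using pid_restr_X M_opmap by simp
  qed
next
  case (Suc k)
  show ?case
  proof (intro allI impI)
    fix D assume D: "D \<subseteq> Omega n" "card (Omega n - D) = Suc (Suc k)"
    then obtain i where i: "i \<in> Omega n - D" by (metis card.empty ex_in_conv nat.distinct(1))
    have "card (Omega n - insert i D) = Suc k" using D i
      by (metis Diff_insert card_Diff_singleton diff_Suc_1 finite_Diff finite_Omega)
    then have "pid n |` insert i D \<in> M" using Suc.IH D i by auto
    moreover have "opmap n i i \<in> M" using M_opmap i by auto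
    ultimately show "pid n |` D \<in> M" using pid_restr_step[of i D] i M_mult by auto
  qed
qed

lemma M_pidr: "D \<subseteq> Omega n \<Longrightarrow> D \<noteq> Omega n \<Longrightarrow> pid n |` D \<in> M"
proof -
  assume a: "D \<subseteq> Omega n" "D \<noteq> Omega n"
  then have "card (Omega n - D) \<noteq> 0" by (simp add: Diff_eq_empty_iff)
  then obtain k where "card (Omega n - D) = Suc k" using not0_implies_Suc by blast
  then show ?thesis using M_pidr_aux a by blast
qed

lemma restr_comp: "D \<subseteq> E \<Longrightarrow> D \<subseteq> Omega n \<Longrightarrow> f |` D = pcomp (pid n |` D) (f |` E)"
  by (rule ext) (auto simp: restrict_map_def pid_def pcomp_apply)

lemma M_restr: assumes "i \<in> Omega n" "j \<in> Omega n" "D \<subseteq> Omega n - {i}" "D \<noteq> Omega n - {i}"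
  shows "opmap n i j |` D \<in> M"
proof -
  have pD: "pid n |` D \<in> M" using M_pidr assms by blast
  show ?thesis
  proof (cases "even (i + j)")
    case True
    have "opmap n i j |` (Omega n - {i}) = opmap n i j"
      by (rule ext) (auto simp: restrict_map_def opmap_apply)
    then have "opmap n i j |` D = pcomp (pid n |` D) (opmap n i j)"
      using restr_comp[of D "Omega n - {i}" "opmap n i j"] assms by auto
    then show ?thesis using pD M_opmap[OF assms(1,2) True] M_mult by simp
  next
    case False
    obtain b where b: "b \<in> Omega n - {i}" "b \<notin> D" using assms by blast
    define t where "t = (if b < i then b else b - 1)"
    have tb: "(if t < i then t else t + 1) = b" using b unfolding t_def by auto
    have t1: "1 \<le> t" "t + 1 \<le> n" using b assms(1) unfolding t_def by auto
    have tO: "t \<in> Omega n" "t + 1 \<in> Omega n" using t1 by auto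
    have E: "opmap n i j |` (Omega n - {i} - {b}) \<in> M"
    proof (cases "even (t + i)")
      case True
      have p1: "even (i + t)" using True by (simp add: add.commute)
      have p2: "even (t + 1 + j)" using True False by presburger
      have "pcomp (opmap n i t) (opmap n (t + 1) j) \<in> M"
        by (rule M_mult[OF M_opmap[OF assms(1) tO(1) p1] M_opmap[OF tO(2) assms(2) p2]])
      then show ?thesis using restr1[OF assms(1,2) t1, unfolded tb] by simp
    next
      case odd: False
      have p1: "even (i + (t + 1))" using odd by presburger
      have p2: "even (t + j)" using odd False by presburger
      have "pcomp (opmap n i (t + 1)) (opmap n t j) \<in> M"
        by (rule M_mult[OF M_opmap[OF assms(1) tO(2) p1] M_opmap[OF tO(1) assms(2) p2]])
      then show ?thesis using restr2[OF assms(1,2) t1, unfolded tb] by simp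
    qed
    have "opmap n i j |` D = pcomp (pid n |` D) (opmap n i j |` (Omega n - {i} - {b}))"
      using restr_comp[of D "Omega n - {i} - {b}" "opmap n i j"] assms b by auto
    then show ?thesis using pD E M_mult by simp
  qed
qed

end

definition mu :: "pmap \<Rightarrow> nat" where
  "mu a = (\<Sum>x\<in>dom a. (the (a x) - x) + (x - the (a x)))"

lemma the_eq_imp: "x \<in> dom a \<Longrightarrow> y \<in> dom a \<Longrightarrow> the (a x) = the (a y) \<Longrightarrow> a x = a y"
  by (auto simp: domIff)

lemma chain_ineq: assumes "a \<in> PI n" "order_preserving a"
  shows "(\<forall>z. y \<le> z \<and> z \<le> y + d \<longrightarrow> z \<in> dom a) \<Longrightarrow> the (a y) + d \<le> the (a (y + d))"
proof (induction d)
  case 0 show ?case by simp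
next
  case (Suc d)
  have IH: "the (a y) + d \<le> the (a (y + d))" using Suc by auto
  have m1: "y + d \<in> dom a" "y + Suc d \<in> dom a" using Suc.prems by auto
  have "the (a (y + d)) \<le> the (a (y + Suc d))" using assms(2) m1 unfolding order_preserving_def by auto
  moreover have "the (a (y + d)) \<noteq> the (a (y + Suc d))"
  proof
    assume "the (a (y + d)) = the (a (y + Suc d))"
    then have "a (y + d) = a (y + Suc d)" using m1 by (rule the_eq_imp[rotated 2])
    then have "y + d = y + Suc d" using inj_onD[OF PI_D(3)[OF assms(1)] _ m1] by blast
    then show False by simp
  qed
  ultimately show ?case using IH by simp
qed

lemma AR1: "(g::nat) < x \<Longrightarrow> y \<noteq> g \<Longrightarrow> opv g x y \<noteq> x \<and> (if g \<le> opv g x y \<and> opv g x y < x then opv g x y + 1 else opv g x y) = y"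
  unfolding opv_def Let_def by auto

lemma AR2: "(g::nat) < x \<Longrightarrow> z1 \<noteq> x \<Longrightarrow> z2 \<noteq> x \<Longrightarrow>
  (if g \<le> z1 \<and> z1 < x then z1 + 1 else z1) = (if g \<le> z2 \<and> z2 < x then z2 + 1 else z2) \<Longrightarrow> z1 = z2"
  by (auto split: if_splits)

lemma AR3: "(z1::nat) \<le> z2 \<Longrightarrow> (if g \<le> z1 \<and> z1 < x then z1 + 1 else z1) \<le> (if g \<le> z2 \<and> z2 < x then z2 + 1 else z2)"
  by auto

lemma AR4: "(g::nat) < x \<Longrightarrow> y \<noteq> g \<Longrightarrow> (if g < y \<and> y \<le> x then y - 1 else y) \<noteq> x \<and>
  (let z = (if g < y \<and> y \<le> x then y - 1 else y) in if g \<le> z \<and> z < x then z + 1 else z) = y"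
  unfolding Let_def by auto

lemma AR5: "(g::nat) < x \<Longrightarrow> z \<noteq> x \<Longrightarrow>
  (let y = (if g \<le> z \<and> z < x then z + 1 else z) in if g < y \<and> y \<le> x then y - 1 else y) = z"
  unfolding Let_def by auto

context L begin

lemma shift_lemma:
  assumes a: "\<alpha> \<in> PI n" "order_preserving \<alpha>" "card (dom \<alpha>) + 2 \<le> n" "x \<in> dom \<alpha>" "the (\<alpha> x) < x"
  shows "\<exists>s \<gamma>. s \<in> M \<and> \<gamma> \<in> PI n \<and> order_preserving \<gamma> \<and> card (dom \<gamma>) \<le> card (dom \<alpha>) \<and> mu \<gamma> < mu \<alpha> \<and> \<alpha> = pcomp s \<gamma>"
proof -
  have domO: "dom \<alpha> \<subseteq> Omega n" using PI_D(1)[OF a(1)] .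
  have xO: "x \<in> Omega n" using a(4) domO by blast
  define S where "S = {y \<in> Omega n. y < x \<and> y \<notin> dom \<alpha>}"
  have finS: "finite S" unfolding S_def by simp
  have Sne: "S \<noteq> {}"
  proof
    assume S0: "S = {}"
    have all: "\<forall>z. 1 \<le> z \<and> z \<le> 1 + (x - 1) \<longrightarrow> z \<in> dom \<alpha>"
    proof (intro allI impI)
      fix z assume z: "1 \<le> z \<and> z \<le> 1 + (x - 1)"
      show "z \<in> dom \<alpha>"
      proof (cases "z = x")
        case False
        then have "z \<in> Omega n" "z < x" using z xO by auto
        then show ?thesis using S0 unfolding S_def by blast
      qed (use a(4) in simp)
    qed
    have c: "the (\<alpha> 1) + (x - 1) \<le> the (\<alpha> (1 + (x - 1)))" by (rule chain_ineq[OF a(1,2) all])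
    have "1 \<in> dom \<alpha>" using all xO by auto
    then obtain v where v: "\<alpha> 1 = Some v" by auto
    then have "1 \<le> v" using PI_val(2)[OF a(1) v] by simp
    moreover have "1 + (x - 1) = x" using xO by simp
    ultimately show False using c v a(5) by simp
  qed
  define g where "g = Max S"
  have gS: "g \<in> S" unfolding g_def using Max_in[OF finS Sne] .
  have gx: "g < x" "g \<notin> dom \<alpha>" "1 \<le> g" "g \<in> Omega n" using gS unfolding S_def by auto
  have gmax: "\<And>y. y \<in> S \<Longrightarrow> y \<le> g" unfolding g_def using Max_ge[OF finS] by blast
  have gap: "\<And>z. g < z \<Longrightarrow> z \<le> x \<Longrightarrow> z \<in> dom \<alpha>"
  proof -
    fix z assume z: "g < z" "z \<le> x"
    show "z \<in> dom \<alpha>"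
    proof (rule ccontr)
      assume nz: "z \<notin> dom \<alpha>"
      then have "z \<noteq> x" using a(4) by auto
      then have "z \<in> S" unfolding S_def using z nz gx xO by auto
      then show False using gmax z by fastforce
    qed
  qed
  have below: "\<And>z. g < z \<Longrightarrow> z \<le> x \<Longrightarrow> the (\<alpha> z) < z"
  proof -
    fix z assume z: "g < z" "z \<le> x"
    have all: "\<forall>w. z \<le> w \<and> w \<le> z + (x - z) \<longrightarrow> w \<in> dom \<alpha>" using gap z by auto
    have "the (\<alpha> z) + (x - z) \<le> the (\<alpha> (z + (x - z)))" by (rule chain_ineq[OF a(1,2) all])
    then show "the (\<alpha> z) < z" using z a(5) by simp
  qed
  define \<tau> where "\<tau> = (\<lambda>z::nat. if g \<le> z \<and> z < x then z + 1 else z)"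
  define \<rho> where "\<rho> = (\<lambda>y::nat. if g < y \<and> y \<le> x then y - 1 else y)"
  define \<gamma> where "\<gamma> = (\<lambda>z. if z = x then None else \<alpha> (\<tau> z))"
  define s where "s = opmap n g x |` dom \<alpha>"
  have sM: "s \<in> M" unfolding s_def
  proof (rule M_restr[OF gx(4) xO])
    show "dom \<alpha> \<subseteq> Omega n - {g}" using domO gx by auto
    have "card (Omega n - {g}) = n - 1" using gx by simp
    then show "dom \<alpha> \<noteq> Omega n - {g}" using a(3) by auto
  qed
  have domg: "\<And>z. z \<in> dom \<gamma> \<longleftrightarrow> z \<noteq> x \<and> \<tau> z \<in> dom \<alpha>"
    unfolding \<gamma>_def by (auto simp: domIff)
  have tau_inj: "inj_on \<tau> (dom \<gamma>)"
    by (rule inj_onI) (use AR2[OF gx(1)] domg in \<open>auto simp: \<tau>_def\<close>)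
  have img: "\<tau> ` dom \<gamma> = dom \<alpha>"
  proof
    show "\<tau> ` dom \<gamma> \<subseteq> dom \<alpha>" using domg by auto
    show "dom \<alpha> \<subseteq> \<tau> ` dom \<gamma>"
    proof
      fix y assume y: "y \<in> dom \<alpha>"
      then have "y \<noteq> g" using gx by auto
      then have r: "\<rho> y \<noteq> x" "\<tau> (\<rho> y) = y" using AR4[OF gx(1)] unfolding \<rho>_def \<tau>_def Let_def by auto
      then have "\<rho> y \<in> dom \<gamma>" using domg y by simp
      then show "y \<in> \<tau> ` dom \<gamma>" using r by force
    qed
  qed
  have eq: "\<alpha> = pcomp s \<gamma>"
  proof (rule ext)
    fix y show "\<alpha> y = pcomp s \<gamma> y"
    proof (cases "y \<in> dom \<alpha>")
      case True
      then have yg: "y \<noteq> g" "y \<in> Omega n" using gx domO by auto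
      have sy: "s y = Some (opv g x y)" unfolding s_def using True yg by (simp add: opmap_apply)
      have "opv g x y \<noteq> x" "\<tau> (opv g x y) = y" using AR1[OF gx(1) yg(1)] unfolding \<tau>_def by auto
      then show ?thesis using sy by (simp add: pcomp_apply \<gamma>_def)
    next
      case False
      then show ?thesis unfolding s_def by (simp add: pcomp_apply domIff)
    qed
  qed
  have gPI: "\<gamma> \<in> PI n"
  proof -
    have "dom \<gamma> \<subseteq> Omega n"
    proof
      fix z assume z: "z \<in> dom \<gamma>"
      then have "\<tau> z \<in> Omega n" using domg domO by blast
      moreover have "1 \<le> z" using gx(3) \<open>\<tau> z \<in> Omega n\<close> unfolding \<tau>_def by (auto split: if_splits)
      moreover have "z \<le> \<tau> z" unfolding \<tau>_def by auto
      ultimately show "z \<in> Omega n" by auto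
    qed
    moreover have "ran \<gamma> \<subseteq> Omega n"
      using PI_D(2)[OF a(1)] unfolding \<gamma>_def by (auto simp: ran_def split: if_splits)
    moreover have "inj_on \<gamma> (dom \<gamma>)"
    proof (rule inj_onI)
      fix z1 z2 assume z: "z1 \<in> dom \<gamma>" "z2 \<in> dom \<gamma>" "\<gamma> z1 = \<gamma> z2"
      then have "\<alpha> (\<tau> z1) = \<alpha> (\<tau> z2)" using domg unfolding \<gamma>_def by auto
      then have "\<tau> z1 = \<tau> z2" using PI_D(3)[OF a(1)] domg z by (auto dest: inj_onD)
      then show "z1 = z2" using tau_inj z by (auto dest: inj_onD)
    qed
    ultimately show ?thesis by (simp add: PI_def)
  qed
  have gop: "order_preserving \<gamma>"
    unfolding order_preserving_def
  proof (intro ballI impI)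
    fix z1 z2 assume z: "z1 \<in> dom \<gamma>" "z2 \<in> dom \<gamma>" "z1 \<le> z2"
    have "\<tau> z1 \<le> \<tau> z2" unfolding \<tau>_def using AR3[OF z(3)] by simp
    moreover have "\<tau> z1 \<in> dom \<alpha>" "\<tau> z2 \<in> dom \<alpha>" "z1 \<noteq> x" "z2 \<noteq> x" using domg z by auto
    ultimately show "the (\<gamma> z1) \<le> the (\<gamma> z2)" using a(2) unfolding order_preserving_def \<gamma>_def by auto
  qed
  have card_eq: "card (dom \<gamma>) = card (dom \<alpha>)"
    using card_image[OF tau_inj] img by simp
  have mu_lt: "mu \<gamma> < mu \<alpha>"
  proof -
    define F where "F = (\<lambda>y. (the (\<alpha> y) - \<rho> y) + (\<rho> y - the (\<alpha> y)))"
    define G where "G = (\<lambda>y. (the (\<alpha> y) - y) + (y - the (\<alpha> y)))"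
    have s1: "mu \<gamma> = (\<Sum>z\<in>dom \<gamma>. F (\<tau> z))"
      unfolding mu_def
    proof (rule sum.cong[OF refl])
      fix z assume z: "z \<in> dom \<gamma>"
      then have "z \<noteq> x" using domg by simp
      then have "\<rho> (\<tau> z) = z" using AR5[OF gx(1)] unfolding \<rho>_def \<tau>_def Let_def by simp
      then show "the (\<gamma> z) - z + (z - the (\<gamma> z)) = F (\<tau> z)"
        unfolding F_def \<gamma>_def using \<open>z \<noteq> x\<close> by simp
    qed
    have s2: "(\<Sum>z\<in>dom \<gamma>. F (\<tau> z)) = (\<Sum>y\<in>dom \<alpha>. F y)"
    proof -
      have "sum F (\<tau> ` dom \<gamma>) = sum (F \<circ> \<tau>) (dom \<gamma>)" by (rule sum.reindex[OF tau_inj])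
      then have "sum F (dom \<alpha>) = (\<Sum>z\<in>dom \<gamma>. F (\<tau> z))" by (simp only: img o_def)
      then show ?thesis by (rule sym)
    qed
    have s3: "(\<Sum>y\<in>dom \<alpha>. F y) < (\<Sum>y\<in>dom \<alpha>. G y)"
    proof (rule sum_strict_mono_ex1)
      show "finite (dom \<alpha>)" by (rule finite_subset[OF domO finite_Omega])
      have le: "F y \<le> G y" if y: "y \<in> dom \<alpha>" for y
      proof (cases "g < y \<and> y \<le> x")
        case True
        then have lt: "the (\<alpha> y) < y" using below by blast
        have r: "\<rho> y = y - 1" unfolding \<rho>_def using True by simp
        have "F y = (the (\<alpha> y) - (y - 1)) + ((y - 1) - the (\<alpha> y))" unfolding F_def r by simp
        moreover have "G y = (the (\<alpha> y) - y) + (y - the (\<alpha> y))" unfolding G_def by simp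
        ultimately show ?thesis using lt by linarith
      next
        case False
        have r: "\<rho> y = y" unfolding \<rho>_def using False by auto
        show ?thesis unfolding F_def G_def r by simp
      qed
      then show "\<forall>y\<in>dom \<alpha>. F y \<le> G y" by blast
      have r: "\<rho> x = x - 1" unfolding \<rho>_def using gx by simp
      have "F x = (the (\<alpha> x) - (x - 1)) + ((x - 1) - the (\<alpha> x))" unfolding F_def r by simp
      moreover have "G x = (the (\<alpha> x) - x) + (x - the (\<alpha> x))" unfolding G_def by simp
      ultimately have "F x < G x" using a(5) by linarith
      then show "\<exists>y\<in>dom \<alpha>. F y < G y" using a(4) by blast
    qed
    have s4: "(\<Sum>y\<in>dom \<alpha>. G y) = mu \<alpha>" unfolding mu_def G_def by simp
    show ?thesis using s1 s2 s3 s4 by linarith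
  qed
  show ?thesis using sM gPI gop card_eq mu_lt eq by (intro exI[of _ s] exI[of _ \<gamma>]) simp
qed

end

definition conjm :: "nat \<Rightarrow> pmap \<Rightarrow> pmap" where
  "conjm n a = pcomp (pcomp (hmap n) a) (hmap n)"

lemma conj_apply: assumes "ran a \<subseteq> Omega n"
  shows "conjm n a z = (if z \<in> Omega n then map_option (\<lambda>v. n + 1 - v) (a (n + 1 - z)) else None)"
proof (cases "z \<in> Omega n")
  case True
  show ?thesis
  proof (cases "a (n + 1 - z)")
    case None then show ?thesis using True by (simp add: conjm_def pcomp_apply hmap_apply)
  next
    case (Some v)
    then have "v \<in> Omega n" using assms by (auto simp: ran_def)
    then show ?thesis using True Some by (simp add: conjm_def pcomp_apply hmap_apply)
  qed
next
  case False
  then have "hmap n z = None" by (simp add: hmap_apply)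
  then have "conjm n a z = None" by (simp add: conjm_def pcomp_apply)
  then show ?thesis by (subst if_not_P[OF False])
qed

lemma conj_PI: "a \<in> PI n \<Longrightarrow> conjm n a \<in> PI n"
  unfolding conjm_def by (intro pcomp_PI hmap_PI)

lemma conj_op: "order_preserving a \<Longrightarrow> order_preserving (conjm n a)"
  unfolding conjm_def by (intro op_comp_rr op_comp_rp hmap_rev)

lemma pcomp_h_cancel: assumes "a \<in> PI n" shows "pcomp (pcomp a (hmap n)) (hmap n) = a"
proof -
  have "pcomp (pcomp a (hmap n)) (hmap n) = pcomp a (pid n)" by (simp add: pcomp_assoc hh)
  then show ?thesis using pcomp_pid_right PI_D(2)[OF assms] by simp
qed

lemma conj_conj: assumes "a \<in> PI n" shows "conjm n (conjm n a) = a"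
proof -
  have r: "ran (pcomp (hmap n) a) \<subseteq> Omega n" using ran_pcomp_sub PI_D(2)[OF assms] by blast
  have "conjm n (conjm n a) = pcomp (hmap n) (pcomp (pcomp (pcomp (hmap n) a) (hmap n)) (hmap n))"
    by (simp add: conjm_def pcomp_assoc)
  also have "\<dots> = pcomp (hmap n) (pcomp (hmap n) a)"
    using pcomp_h_cancel[OF pcomp_PI[OF hmap_PI assms]] by simp
  also have "\<dots> = pcomp (pid n) a" by (simp add: pcomp_assoc[symmetric] hh)
  also have "\<dots> = a" using pcomp_pid_left PI_D(1)[OF assms] by simp
  finally show ?thesis .
qed

lemma dom_conj: assumes "a \<in> PI n" shows "dom (conjm n a) = (\<lambda>z. n + 1 - z) ` dom a"
proof -
  have d: "\<And>z. z \<in> dom (conjm n a) \<longleftrightarrow> z \<in> Omega n \<and> n + 1 - z \<in> dom a"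
    using conj_apply[OF PI_D(2)[OF assms]] by (auto simp: domIff)
  show ?thesis
  proof
    show "dom (conjm n a) \<subseteq> (\<lambda>z. n + 1 - z) ` dom a"
    proof
      fix z assume "z \<in> dom (conjm n a)"
      then have "z \<in> Omega n" "n + 1 - z \<in> dom a" using d by auto
      moreover have "z = n + 1 - (n + 1 - z)" using \<open>z \<in> Omega n\<close> by simp
      ultimately show "z \<in> (\<lambda>z. n + 1 - z) ` dom a" by blast
    qed
    show "(\<lambda>z. n + 1 - z) ` dom a \<subseteq> dom (conjm n a)"
    proof
      fix z assume "z \<in> (\<lambda>z. n + 1 - z) ` dom a"
      then obtain y where y: "y \<in> dom a" "z = n + 1 - y" by blast
      then have "y \<in> Omega n" using PI_D(1)[OF assms] by blast
      then show "z \<in> dom (conjm n a)" using d y by auto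
    qed
  qed
qed

lemma inj_refl: "dom a \<subseteq> Omega n \<Longrightarrow> inj_on (\<lambda>z. n + 1 - z) (dom a)"
  by (rule inj_onI) (use subsetD in fastforce)

lemma card_conj: assumes "a \<in> PI n" shows "card (dom (conjm n a)) = card (dom a)"
  unfolding dom_conj[OF assms] using card_image[OF inj_refl[OF PI_D(1)[OF assms]]] .

lemma mu_conj: assumes "a \<in> PI n" shows "mu (conjm n a) = mu a"
proof -
  let ?p = "\<lambda>z. n + 1 - z"
  have inj: "inj_on ?p (dom a)" by (rule inj_refl[OF PI_D(1)[OF assms]])
  define D where "D = (\<lambda>z. (the (conjm n a z) - z) + (z - the (conjm n a z)))"
  have "mu (conjm n a) = sum D (?p ` dom a)" unfolding mu_def D_def dom_conj[OF assms] by simp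
  also have "\<dots> = sum (D \<circ> ?p) (dom a)" by (rule sum.reindex[OF inj])
  also have "\<dots> = mu a" unfolding mu_def
  proof (rule sum.cong[OF refl])
    fix y assume y: "y \<in> dom a"
    then have yO: "y \<in> Omega n" using PI_D(1)[OF assms] by blast
    obtain v where v: "a y = Some v" using y by auto
    then have vO: "v \<in> Omega n" using PI_val(2)[OF assms v] by simp
    have e: "n + 1 - y \<in> Omega n" "n + 1 - (n + 1 - y) = y" using yO by auto
    have "conjm n a (n + 1 - y) = Some (n + 1 - v)"
      using conj_apply[OF PI_D(2)[OF assms], of "n + 1 - y"] e v by simp
    then show "(D \<circ> ?p) y = the (a y) - y + (y - the (a y))" unfolding D_def using v vO yO by auto
  qed
  finally show ?thesis .
qed

context L begin

lemma M_small: "\<forall>a. mu a = k \<longrightarrow> a \<in> PI n \<longrightarrow> order_preserving a \<longrightarrow> card (dom a) + 2 \<le> n \<longrightarrow> a \<in> M"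
proof (induction k rule: less_induct)
  case (less k)
  show ?case
  proof (intro allI impI)
    fix a assume a: "mu a = k" "a \<in> PI n" "order_preserving a" "card (dom a) + 2 \<le> n"
    have dO: "dom a \<subseteq> Omega n" using PI_D(1)[OF a(2)] .
    have step: "b \<in> M" if b: "mu b = k" "b \<in> PI n" "order_preserving b" "card (dom b) + 2 \<le> n" "x \<in> dom b" "the (b x) < x" for b x
    proof -
      obtain s \<gamma> where sg: "s \<in> M" "\<gamma> \<in> PI n" "order_preserving \<gamma>" "card (dom \<gamma>) \<le> card (dom b)" "mu \<gamma> < mu b" "b = pcomp s \<gamma>"
        using shift_lemma[OF b(2,3,4,5,6)] by blast
      have "\<gamma> \<in> M" using less.IH[of "mu \<gamma>"] sg b by auto
      then show ?thesis using sg(1,6) M_mult by simp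
    qed
    show "a \<in> M"
    proof (cases "\<exists>x\<in>dom a. the (a x) < x")
      case True
      then obtain x where "x \<in> dom a" "the (a x) < x" by blast
      then show ?thesis using step a by blast
    next
      case nlt: False
      show ?thesis
      proof (cases "\<exists>x\<in>dom a. x < the (a x)")
        case True
        then obtain x where x: "x \<in> dom a" "x < the (a x)" by blast
        let ?b = "conjm n a"
        have xO: "x \<in> Omega n" using x dO by blast
        obtain v where v: "a x = Some v" using x by auto
        have vO: "v \<in> Omega n" using PI_val(2)[OF a(2) v] by simp
        have e: "n + 1 - x \<in> Omega n" "n + 1 - (n + 1 - x) = x" using xO by auto
        have bz: "?b (n + 1 - x) = Some (n + 1 - v)"
          using conj_apply[OF PI_D(2)[OF a(2)], of "n + 1 - x"] e v by simp
        have "n + 1 - x \<in> dom ?b" using bz by auto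
        moreover have "the (?b (n + 1 - x)) < n + 1 - x" using bz x v vO by simp
        ultimately have "?b \<in> M" using step[of ?b] a conj_PI conj_op mu_conj card_conj by simp
        then have "conjm n ?b \<in> M" unfolding conjm_def[of n ?b] by (rule M_conj)
        then show ?thesis using conj_conj[OF a(2)] by simp
      next
        case False
        have id: "\<And>x. x \<in> dom a \<Longrightarrow> a x = Some x"
        proof -
          fix x assume x: "x \<in> dom a"
          then have "\<not> the (a x) < x" "\<not> x < the (a x)" using nlt False by blast+
          then have "the (a x) = x" by simp
          then show "a x = Some x" using x by (auto simp: domIff)
        qed
        have "a = pid n |` dom a"
        proof (rule ext)
          fix x show "a x = (pid n |` dom a) x"
            using id dO by (cases "x \<in> dom a") (auto simp: pid_def restrict_map_def domIff)
        qed
        moreover have "dom a \<noteq> Omega n" using a(4) by auto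
        ultimately show ?thesis using M_pidr[OF dO] by simp
      qed
    qed
  qed
qed

lemma card_minus_one: assumes "D \<subseteq> Omega n" "card D = n - 1" "1 \<le> n"
  shows "\<exists>i\<in>Omega n. D = Omega n - {i}"
proof -
  have "card (Omega n - D) = 1" using assms card_Diff_subset[OF finite_subset[OF assms(1) finite_Omega] assms(1)] by simp
  then obtain i where i: "Omega n - D = {i}" by (auto simp: card_Suc_eq)
  then have "D = Omega n - {i}" "i \<in> Omega n" using assms(1) by auto
  then show ?thesis by blast
qed

lemma AM_op_in_M: assumes "a \<in> AM n" "order_preserving a" shows "a \<in> M"
proof -
  have P: "a \<in> PI n" using AM_PI[OF assms(1)] .
  have dO: "dom a \<subseteq> Omega n" using PI_D(1)[OF P] .
  have rO: "ran a \<subseteq> Omega n" using PI_D(2)[OF P] .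
  have cle: "card (dom a) \<le> n" using card_mono[OF finite_Omega dO] by simp
  have n1: "1 \<le> n" using nm by simp
  consider "card (dom a) = n" | "card (dom a) = n - 1" | "card (dom a) + 2 \<le> n" using cle by linarith
  then show ?thesis
  proof cases
    case 1
    then have "dom a = Omega n" using card_subset_eq[OF finite_Omega dO] by simp
    then have "a = pid n" using OPU_full[OF P assms(2)] by simp
    then show ?thesis by (simp add: gen.gen_id)
  next
    case 2
    then obtain i where i: "i \<in> Omega n" "dom a = Omega n - {i}" using card_minus_one[OF dO _ n1] by blast
    have "card (ran a) = n - 1" using card_ran[OF P] 2 by simp
    then obtain j where j: "j \<in> Omega n" "ran a = Omega n - {j}" using card_minus_one[OF rO _ n1] by blast
    have eq: "a = opmap n i j" using OPU[OF P assms(2) i(2) j(2) i(1) j(1)] .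
    have "a \<in> AI n" using assms(1) by (simp add: AM_def)
    then have "even (i + j)" using opmap_AI_parity[OF _ i(1) j(1)] eq by simp
    then show ?thesis using M_opmap[OF i(1) j(1)] eq by simp
  next
    case 3
    then show ?thesis using M_small P assms(2) by blast
  qed
qed

lemma AM_in_M: assumes "a \<in> AM n" shows "a \<in> M"
proof (cases "order_preserving a")
  case True then show ?thesis using AM_op_in_M assms by blast
next
  case False
  then have rev: "order_reversing a" using assms by (simp add: AM_def PMI_def)
  let ?b = "pcomp a (hmap n)"
  have "?b \<in> AM n" using AM_comp[OF assms hmap_AM[OF nmod]] .
  moreover have "order_preserving ?b" using op_comp_rr[OF rev hmap_rev] .
  ultimately have "?b \<in> M" using AM_op_in_M by blast
  then have "pcomp ?b (hmap n) \<in> M" using M_mult M_h by blast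
  then show ?thesis using pcomp_h_cancel[OF AM_PI[OF assms]] by simp
qed

lemma gen_eq_AM: "gen n (genset n) = AM n"
  using gen_sub[OF genset_AM] AM_in_M by blast

lemma card_genset: "card (genset n) = (n + 1) div 2 + 1"
proof -
  let ?X = "(\<lambda>i. opmap n i (i - 2)) ` {2 * m + 3..n}"
  have X: "{opmap n i (i - 2) | i. 2 * m + 3 \<le> i \<and> i \<le> n} = ?X" by auto
  have dom_op: "\<And>i j. dom (opmap n i j) = Omega n - {i}" by simp
  have domeq: "\<And>p q. p \<in> Omega n \<Longrightarrow> q \<in> Omega n \<Longrightarrow> Omega n - {p} = Omega n - {q} \<Longrightarrow> p = q" by blast
  have inj: "inj_on (\<lambda>i. opmap n i (i - 2)) {2 * m + 3..n}"
  proof (rule inj_onI)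
    fix p q assume pq: "p \<in> {2 * m + 3..n}" "q \<in> {2 * m + 3..n}" "opmap n p (p - 2) = opmap n q (q - 2)"
    then have "dom (opmap n p (p - 2)) = dom (opmap n q (q - 2))" by simp
    then have "Omega n - {p} = Omega n - {q}" by simp
    moreover have "p \<in> Omega n" "q \<in> Omega n" using pq nm by auto
    ultimately show "p = q" using domeq by blast
  qed
  have cX: "card ?X = 2 * m - 1" using card_image[OF inj] nm by simp
  have hX: "hmap n \<notin> ?X"
  proof
    assume "hmap n \<in> ?X"
    then obtain i where i: "i \<in> {2 * m + 3..n}" "hmap n = opmap n i (i - 2)" by blast
    then have "dom (hmap n) = dom (opmap n i (i - 2))" by simp
    then have "Omega n = Omega n - {i}" by simp
    moreover have "i \<in> Omega n" using i nm by auto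
    ultimately show False by blast
  qed
  have p1X: "opmap n (2 * m + 2) 2 \<notin> ?X"
  proof
    assume "opmap n (2 * m + 2) 2 \<in> ?X"
    then obtain i where i: "i \<in> {2 * m + 3..n}" "opmap n (2 * m + 2) 2 = opmap n i (i - 2)" by blast
    then have "dom (opmap n (2 * m + 2) 2) = dom (opmap n i (i - 2))" by simp
    then have "Omega n - {2 * m + 2} = Omega n - {i}" by simp
    moreover have "2 * m + 2 \<in> Omega n" "i \<in> Omega n" using i nm by auto
    ultimately have "2 * m + 2 = i" using domeq by blast
    then show False using i by auto
  qed
  have p2X: "opmap n (2 * m + 1) 1 \<notin> ?X"
  proof
    assume "opmap n (2 * m + 1) 1 \<in> ?X"
    then obtain i where i: "i \<in> {2 * m + 3..n}" "opmap n (2 * m + 1) 1 = opmap n i (i - 2)" by blast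
    then have "dom (opmap n (2 * m + 1) 1) = dom (opmap n i (i - 2))" by simp
    then have "Omega n - {2 * m + 1} = Omega n - {i}" by simp
    moreover have "2 * m + 1 \<in> Omega n" "i \<in> Omega n" using i nm by auto
    ultimately have "2 * m + 1 = i" using domeq by blast
    then show False using i by auto
  qed
  have p12: "opmap n (2 * m + 2) 2 \<noteq> opmap n (2 * m + 1) 1"
  proof
    assume "opmap n (2 * m + 2) 2 = opmap n (2 * m + 1) 1"
    then have "dom (opmap n (2 * m + 2) 2) = dom (opmap n (2 * m + 1) 1)" by simp
    then have "Omega n - {2 * m + 2} = Omega n - {2 * m + 1}" by simp
    moreover have "2 * m + 2 \<in> Omega n" "2 * m + 1 \<in> Omega n" using nm m1 by auto
    ultimately show False using domeq[of "2 * m + 2" "2 * m + 1"] by simp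
  qed
  have hp: "hmap n \<noteq> opmap n (2 * m + 2) 2" "hmap n \<noteq> opmap n (2 * m + 1) 1"
  proof -
    show "hmap n \<noteq> opmap n (2 * m + 2) 2"
    proof
      assume "hmap n = opmap n (2 * m + 2) 2"
      then have "dom (hmap n) = dom (opmap n (2 * m + 2) 2)" by simp
      then have "Omega n = Omega n - {2 * m + 2}" by simp
      moreover have "2 * m + 2 \<in> Omega n" using nm m1 by auto
      ultimately show False by blast
    qed
    show "hmap n \<noteq> opmap n (2 * m + 1) 1"
    proof
      assume "hmap n = opmap n (2 * m + 1) 1"
      then have "dom (hmap n) = dom (opmap n (2 * m + 1) 1)" by simp
      then have "Omega n = Omega n - {2 * m + 1}" by simp
      moreover have "2 * m + 1 \<in> Omega n" using nm m1 by auto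
      ultimately show False by blast
    qed
  qed
  have G: "genset n = insert (hmap n) (insert (opmap n (2 * m + 2) 2) (insert (opmap n (2 * m + 1) 1) ?X))"
    unfolding genset_eq X by auto
  have "card (genset n) = 2 * m - 1 + 3"
    unfolding G using cX hX p1X p2X p12 hp by simp
  then show ?thesis using nm m1 by simp
qed

end

lemma full_dom_AM: assumes "a \<in> AM n" "dom a = Omega n" shows "a = pid n \<or> a = hmap n"
proof (cases "order_preserving a")
  case True
  then show ?thesis using OPU_full[OF AM_PI[OF assms(1)] True assms(2)] by simp
next
  case False
  then have rev: "order_reversing a" using assms by (simp add: AM_def PMI_def)
  have P: "a \<in> PI n" using AM_PI[OF assms(1)] .
  let ?b = "pcomp a (hmap n)"
  have bP: "?b \<in> PI n" using pcomp_PI[OF P hmap_PI] .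
  have "dom ?b = dom a" using dom_pcomp_full[of a "hmap n"] PI_D(2)[OF P] by simp
  then have "?b = pid n" using OPU_full[OF bP op_comp_rr[OF rev hmap_rev]] assms(2) by simp
  then have "a = pcomp (pid n) (hmap n)" using pcomp_h_cancel[OF P] by simp
  then show ?thesis using pcomp_pid_left[of "hmap n" n] by simp
qed

lemma gen_full: assumes "A \<subseteq> AM n" "hmap n \<notin> A" "\<beta> \<in> gen n A"
  shows "dom \<beta> = Omega n \<Longrightarrow> \<beta> = pid n"
  using assms(3)
proof induct
  case gen_id then show ?case by simp
next
  case (gen_step \<beta> a)
  have bAM: "\<beta> \<in> AM n" using gen_sub[OF assms(1)] gen_step(1) by blast
  have aAM: "a \<in> AM n" using assms(1) gen_step(3) by blast
  have "dom (pcomp \<beta> a) \<subseteq> dom \<beta>" by (rule dom_pcomp_sub)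
  then have "dom \<beta> = Omega n" using gen_step(4) PI_D(1)[OF AM_PI[OF bAM]] by blast
  then have "\<beta> = pid n" using gen_step(2) by simp
  then have "pcomp \<beta> a = a" using pcomp_pid_left[OF PI_D(1)[OF AM_PI[OF aAM]]] by simp
  then have "a = pid n \<or> a = hmap n" using full_dom_AM[OF aAM] gen_step(4) by simp
  then show ?case using assms(2) gen_step(3) \<open>pcomp \<beta> a = a\<close> by auto
qed

lemma gen_X: assumes "A \<subseteq> AM n" "\<beta> \<in> gen n A"
  shows "i \<in> Omega n \<Longrightarrow> dom \<beta> = Omega n - {i} \<Longrightarrow> \<exists>a\<in>A. dom a = Omega n - {i} \<or> dom a = Omega n - {n + 1 - i}"
  using assms(2)
proof (induct arbitrary: i)
  case gen_id then show ?case by auto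
next
  case (gen_step \<beta> a)
  have bAM: "\<beta> \<in> AM n" using gen_sub[OF assms(1)] gen_step(1) by blast
  have aAM: "a \<in> AM n" using assms(1) gen_step(3) by blast
  have aD: "dom a \<subseteq> Omega n" using PI_D(1)[OF AM_PI[OF aAM]] .
  have sub: "Omega n - {i} \<subseteq> dom \<beta>" using dom_pcomp_sub[of \<beta> a] gen_step(5) by blast
  have bD: "dom \<beta> \<subseteq> Omega n" using PI_D(1)[OF AM_PI[OF bAM]] .
  show ?case
  proof (cases "dom \<beta> = Omega n")
    case False
    then have "dom \<beta> = Omega n - {i}" using sub bD by blast
    then show ?thesis using gen_step(2)[OF gen_step(4)] by blast
  next
    case True
    then have "\<beta> = pid n \<or> \<beta> = hmap n" using full_dom_AM[OF bAM] by simp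
    then show ?thesis
    proof
      assume "\<beta> = pid n"
      then have "dom a = Omega n - {i}" using gen_step(5) pcomp_pid_left[OF aD] by simp
      then show ?thesis using gen_step(3) by blast
    next
      assume bh: "\<beta> = hmap n"
      have "dom a = Omega n - {n + 1 - i}"
      proof
        show "dom a \<subseteq> Omega n - {n + 1 - i}"
        proof
          fix y assume y: "y \<in> dom a"
          then have yO: "y \<in> Omega n" using aD by blast
          have "1 \<le> n + 1 - y" "n + 1 - y \<le> n" "n + 1 - (n + 1 - y) = y" using yO by auto
          then have hy: "hmap n (n + 1 - y) = Some y" by (simp add: hmap_apply)
          have "pcomp \<beta> a (n + 1 - y) = a y" using hy bh by (simp add: pcomp_apply)
          then have "n + 1 - y \<in> dom (pcomp \<beta> a)" using y by (simp add: domIff)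
          then have "n + 1 - y \<noteq> i" using gen_step(5) by blast
          then show "y \<in> Omega n - {n + 1 - i}" using yO gen_step(4) by auto
        qed
        show "Omega n - {n + 1 - i} \<subseteq> dom a"
        proof
          fix y assume y: "y \<in> Omega n - {n + 1 - i}"
          then have "n + 1 - y \<in> Omega n - {i}" using gen_step(4) by auto
          then have "n + 1 - y \<in> dom (pcomp \<beta> a)" using gen_step(5) by blast
          moreover have "1 \<le> n + 1 - y" "n + 1 - y \<le> n" "n + 1 - (n + 1 - y) = y" using y by auto
          then have hy: "hmap n (n + 1 - y) = Some y" by (simp add: hmap_apply)
          moreover have "pcomp \<beta> a (n + 1 - y) = a y" using hy bh by (simp add: pcomp_apply)
          ultimately show "y \<in> dom a" by (simp add: domIff)
        qed
      qed
      then show ?thesis using gen_step(3) by blast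
    qed
  qed
qed

lemma lower_bound: assumes "n mod 4 = 1" "5 \<le> n" "A \<subseteq> AM n" "gen n A = AM n"
  shows "(n + 1) div 2 + 1 \<le> card A"
proof -
  have finA: "finite A" using finite_subset[OF assms(3) finite_AM] .
  have hA: "hmap n \<in> A"
  proof (rule ccontr)
    assume "hmap n \<notin> A"
    moreover have "hmap n \<in> gen n A" using hmap_AM[OF assms(1)] assms(4) by simp
    ultimately have "hmap n = pid n" using gen_full[OF assms(3)] by simp
    then have "hmap n 1 = pid n 1" by simp
    then show False using assms(2) by (simp add: hmap_apply pid_def)
  qed
  define c where "c = (n + 1) div 2"
  have ex: "\<forall>i\<in>{1..c}. \<exists>a\<in>A. dom a = Omega n - {i} \<or> dom a = Omega n - {n + 1 - i}"
  proof
    fix i assume i: "i \<in> {1..c}"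
    then have iO: "i \<in> Omega n" unfolding c_def by auto
    have "opmap n i i \<in> AM n" using opmap_AM[OF iO iO] by simp
    then have "opmap n i i \<in> gen n A" using assms(4) by simp
    then show "\<exists>a\<in>A. dom a = Omega n - {i} \<or> dom a = Omega n - {n + 1 - i}"
      using gen_X[OF assms(3) _ iO] by simp
  qed
  then have "\<forall>i\<in>{1..c}. \<exists>a. a \<in> A \<and> (dom a = Omega n - {i} \<or> dom a = Omega n - {n + 1 - i})" by blast
  then obtain f where f: "\<forall>i\<in>{1..c}. f i \<in> A \<and> (dom (f i) = Omega n - {i} \<or> dom (f i) = Omega n - {n + 1 - i})"
    by (rule bchoice[THEN exE])
  have domeq: "\<And>p q. p \<in> Omega n \<Longrightarrow> q \<in> Omega n \<Longrightarrow> Omega n - {p} = Omega n - {q} \<Longrightarrow> p = q" by blast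
  have inj: "inj_on f {1..c}"
  proof (rule inj_onI)
    fix p q assume pq: "p \<in> {1..c}" "q \<in> {1..c}" "f p = f q"
    have O: "p \<in> Omega n" "q \<in> Omega n" "n + 1 - p \<in> Omega n" "n + 1 - q \<in> Omega n"
      using pq(1,2) unfolding c_def by auto
    have fp: "dom (f p) = Omega n - {p} \<or> dom (f p) = Omega n - {n + 1 - p}" using f pq(1) by blast
    have fq: "dom (f q) = Omega n - {q} \<or> dom (f q) = Omega n - {n + 1 - q}" using f pq(2) by blast
    obtain kp where kp: "kp = p \<or> kp = n + 1 - p" "dom (f p) = Omega n - {kp}" using fp by blast
    obtain kq where kq: "kq = q \<or> kq = n + 1 - q" "dom (f q) = Omega n - {kq}" using fq by blast
    have kO: "kp \<in> Omega n" "kq \<in> Omega n" using kp(1) kq(1) O by auto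
    have "dom (f p) = dom (f q)" using pq(3) by simp
    then have "Omega n - {kp} = Omega n - {kq}" using kp(2) kq(2) by simp
    then have "kp = kq" using domeq[OF kO] by simp
    moreover have "2 * c \<le> n + 1" unfolding c_def by simp
    moreover have "1 \<le> p" "p \<le> c" "1 \<le> q" "q \<le> c" using pq(1,2) by auto
    ultimately show "p = q" using kp(1) kq(1) by auto
  qed
  have hf: "hmap n \<notin> f ` {1..c}"
  proof
    assume "hmap n \<in> f ` {1..c}"
    then obtain i where i: "i \<in> {1..c}" "hmap n = f i" by blast
    have d: "dom (f i) = Omega n" using dom_hmap[of n] unfolding i(2) .
    have "dom (f i) = Omega n - {i} \<or> dom (f i) = Omega n - {n + 1 - i}" using f i(1) by blast
    then have "Omega n = Omega n - {i} \<or> Omega n = Omega n - {n + 1 - i}" unfolding d .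
    moreover have "i \<in> Omega n" "n + 1 - i \<in> Omega n" using i unfolding c_def by auto
    ultimately show False by blast
  qed
  have sub: "insert (hmap n) (f ` {1..c}) \<subseteq> A" using hA f by blast
  have "card (insert (hmap n) (f ` {1..c})) = c + 1" using hf card_image[OF inj] by simp
  then show ?thesis using card_mono[OF finA sub] unfolding c_def by simp
qed

theorem theorem5p5:
  fixes n :: nat
  assumes "n mod 4 = 1" and "n \<ge> 5"
  shows "genset n \<subseteq> AM n \<and> gen n (genset n) = AM n
       \<and> card (genset n) = (n + 1) div 2 + 1
       \<and> (\<forall>A. A \<subseteq> AM n \<and> gen n A = AM n \<longrightarrow> card (genset n) \<le> card A)
       \<and> mrank n (AM n) = (n + 1) div 2 + 1"
proof -
  have nm: "n = 4 * (n div 4) + 1" using assms(1) by presburger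
  have m1: "1 \<le> n div 4" using assms(2) by simp
  interpret L n "n div 4" by (unfold_locales) (use nm m1 in auto)
  have c1: "genset n \<subseteq> AM n" by (rule genset_AM)
  have c2: "gen n (genset n) = AM n" by (rule gen_eq_AM)
  have c3: "card (genset n) = (n + 1) div 2 + 1" by (rule card_genset)
  have c4: "\<forall>A. A \<subseteq> AM n \<and> gen n A = AM n \<longrightarrow> card (genset n) \<le> card A"
    using lower_bound[OF assms] c3 by auto
  have c5: "mrank n (AM n) = (n + 1) div 2 + 1"
    unfolding mrank_def
  proof (rule Least_equality)
    show "\<exists>A. A \<subseteq> AM n \<and> finite A \<and> card A = (n + 1) div 2 + 1 \<and> gen n A = AM n"
      using c1 c2 c3 finite_subset[OF c1 finite_AM] by blast
    show "\<And>k. \<exists>A. A \<subseteq> AM n \<and> finite A \<and> card A = k \<and> gen n A = AM n \<Longrightarrow> (n + 1) div 2 + 1 \<le> k"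
      using lower_bound[OF assms] by blast
  qed
  show ?thesis using c1 c2 c3 c4 c5 by blast
qed

end
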